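(* Let $\theta\in(0,1)$ be irrational with $\theta^2=1/m$, $m\in\mathbb{N}_+$. There exist constants $K>0$ and $0<\rho<1$ such that for all $k,n\ge1$, every $A\in\sigma(\ell_1,\dots,\ell_k)$ and every $B\in\sigma(\ell_{k+n},\ell_{k+n+1},\dots)$, \[ |\gamma_\theta(A\cap B)-\gamma_\theta(A)\gamma_\theta(B)|\le K\rho^n\,\gamma_\theta(A)\gamma_\theta(B). \] Consequently, with $\psi(n)=K\rho^n$, $\sum_{n=1}^\infty\psi(n)<\infty$.
   Context: Let $m\in\mathbb{N}_+$ not be a perfect square and $\theta=1/\sqrt m$. The map $T_\theta:[0,\theta]\to[0,\theta]$ is $T_\theta(x)=\frac1x-\theta\lfloor\frac{1}{\theta x}\rfloor$ for $x\in(0,\theta]$, $T_\theta(0)=0$. The digits are $\ell_n(x)=\lfloor \frac{1}{\theta T_\theta^{n-1}(x)}\rfloor$, $n\ge1$, with values in $\{m,m+1,\dots\}$. The probability measure $\gamma_\theta$ on $[0,\theta]$ has density $\frac{1}{\log(1+\theta^2)}\cdot\frac{\theta}{1+\theta x}$ with respect to Lebesgue measure and is $T_\theta$-invariant. $\sigma(\cdot)$ denotes the generated $\sigma$-algebra. *)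

theory Defs
  imports "HOL-Probability.Probability"
begin

text \<open>The map T_theta on [0,theta]; T_theta(0) = 0 (and 1/0 = 0 in HOL gives this automatically,
  but we make it explicit).\<close>
definition T_map :: "real \<Rightarrow> real \<Rightarrow> real" where
  "T_map \<theta> x = (if x = 0 then 0 else 1 / x - \<theta> * of_int \<lfloor>1 / (\<theta> * x)\<rfloor>)"

definition digit :: "real \<Rightarrow> nat \<Rightarrow> real \<Rightarrow> int" where
  "digit \<theta> n x = \<lfloor>1 / (\<theta> * ((T_map \<theta>) ^^ (n - 1)) x)\<rfloor>"

definition gamma_meas :: "real \<Rightarrow> real measure" where
  "gamma_meas \<theta> = density (restrict_space lborel {0..\<theta>})
      (\<lambda>x. ennreal (\<theta> / ((1 + \<theta> * x) * ln (1 + \<theta>\<^sup>2))))"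

definition digit_sigma :: "real \<Rightarrow> nat set \<Rightarrow> real set set" where
  "digit_sigma \<theta> I = sigma_sets {0..\<theta>}
      {digit \<theta> i -` D \<inter> {0..\<theta>} | i D. i \<in> I}"

end

theory Submission
  imports Defs
begin

locale tcf =
  fixes \<theta> :: real and m :: nat
  assumes th0: "0 < \<theta>" and th1: "\<theta> < 1" and m0: "m > 0" and thsq: "\<theta>^2 = 1 / real m"
begin

lemma mth: "real m * \<theta> * \<theta> = 1"
  using thsq m0 by (simp add: power2_eq_square field_simps)

lemma mth': "real m * \<theta> = 1 / \<theta>"
  using mth th0 by (simp add: field_simps)

lemma m_ge1: "real m \<ge> 1"
  using m0 by simp

definition Om :: "real set" where "Om = {0..\<theta>}"
definition uu :: "nat \<Rightarrow> real \<Rightarrow> real" where "uu i y = 1 / (real i * \<theta> + y)"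
definition ww :: "nat \<Rightarrow> real \<Rightarrow> real" where
  "ww i y = (1 + \<theta> * y) / ((real i * \<theta> + y) * ((real i + 1) * \<theta> + y))"
definition dens :: "real \<Rightarrow> real" where "dens y = \<theta> / ((1 + \<theta> * y) * ln (1 + \<theta>^2))"

abbreviation T where "T \<equiv> T_map \<theta>"

lemma T_eq: "x \<noteq> 0 \<Longrightarrow> T x = \<theta> * (1/(\<theta>*x) - of_int \<lfloor>1/(\<theta>*x)\<rfloor>)"
  using th0 by (simp add: T_map_def field_simps)

lemma T_Om: assumes "x \<in> Om" shows "T x \<in> Om" "T x < \<theta>"
proof -
  have "T x \<ge> 0 \<and> T x < \<theta>"
  proof (cases "x = 0")
    case True then show ?thesis using th0 by (simp add: T_map_def)
  next
    case False
    have a: "0 \<le> 1/(\<theta>*x) - of_int \<lfloor>1/(\<theta>*x)\<rfloor>" "1/(\<theta>*x) - of_int \<lfloor>1/(\<theta>*x)\<rfloor> < 1"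
      by linarith+
    show ?thesis using T_eq[OF False] a th0
      by (auto intro: mult_nonneg_nonneg simp: mult_less_cancel_left1)
  qed
  then show "T x \<in> Om" "T x < \<theta>" by (auto simp: Om_def)
qed

lemma den_pos: assumes "i \<ge> m" "0 \<le> y" shows "real i * \<theta> + y > 0"
proof -
  have "real i \<ge> 1" using assms m0 by simp
  then have "real i * \<theta> \<ge> \<theta>" using th0 by simp
  then show ?thesis using assms th0 by linarith
qed

lemma uu_pos: "i \<ge> m \<Longrightarrow> 0 \<le> y \<Longrightarrow> 0 < uu i y"
  using den_pos by (simp add: uu_def)

lemma uu_le: assumes "i \<ge> m" "0 \<le> y" shows "uu i y \<le> \<theta>"
proof -
  have "real m * \<theta> \<le> real i * \<theta> + y" using assms th0
    by (smt (verit) mult_right_mono of_nat_le_iff)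
  moreover have "real m * \<theta> > 0" using m0 th0 by simp
  ultimately have "1/(real i * \<theta> + y) \<le> 1/(real m * \<theta>)"
    by (intro divide_left_mono) auto
  then show ?thesis using mth' th0 by (simp add: uu_def)
qed

lemma uu_lt: assumes "i \<ge> m" "0 < y" shows "uu i y < \<theta>"
proof -
  have "real m * \<theta> < real i * \<theta> + y" using assms th0
    by (smt (verit) mult_right_mono of_nat_le_iff)
  moreover have "real m * \<theta> > 0" using m0 th0 by simp
  ultimately have "1/(real i * \<theta> + y) < 1/(real m * \<theta>)"
    by (intro divide_strict_left_mono) auto
  then show ?thesis using mth' th0 by (simp add: uu_def)
qed

lemma uu_Om: "i \<ge> m \<Longrightarrow> y \<in> Om \<Longrightarrow> uu i y \<in> Om"
  using uu_pos uu_le by (auto simp: Om_def less_imp_le)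

lemma floor_uu: assumes "i \<ge> m" "0 \<le> y" "y < \<theta>"
  shows "\<lfloor>1/(\<theta> * uu i y)\<rfloor> = int i"
proof -
  have pos: "real i * \<theta> + y > 0" using assms by (intro den_pos) auto
  have "1/(\<theta> * uu i y) = real i + y/\<theta>"
    using pos th0 by (simp add: uu_def field_simps)
  moreover have "0 \<le> y/\<theta>" "y/\<theta> < 1" using assms th0 by auto
  ultimately show ?thesis by (simp add: floor_eq_iff)
qed

lemma T_uu: assumes "i \<ge> m" "0 \<le> y" "y < \<theta>" shows "T (uu i y) = y"
proof -
  have pos: "real i * \<theta> + y > 0" using assms by (intro den_pos) auto
  have ne: "uu i y \<noteq> 0" using pos by (simp add: uu_def)
  show ?thesis using floor_uu[OF assms] ne pos th0
    by (simp add: T_map_def uu_def)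
qed

lemma digit1_uu: "i \<ge> m \<Longrightarrow> 0 \<le> y \<Longrightarrow> y < \<theta> \<Longrightarrow> digit \<theta> 1 (uu i y) = int i"
  using floor_uu by (simp add: digit_def)

lemma digit_Suc: "s \<ge> 1 \<Longrightarrow> digit \<theta> (Suc s) x = digit \<theta> s (T x)"
  by (cases s) (auto simp: digit_def funpow_Suc_right simp del: funpow.simps)

lemma dens_ww: assumes "i \<ge> m" "0 \<le> y"
  shows "dens (uu i y) / (real i * \<theta> + y)^2 = dens y * ww i y"
proof -
  have pos: "real i * \<theta> + y > 0" using assms by (intro den_pos) auto
  have l: "ln (1 + \<theta>^2) > 0" using th0 by (intro ln_gt_zero) simp
  have "\<theta> * y \<ge> 0" using assms th0 by simp
  then have p2: "1 + \<theta> * y > 0" by linarith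
  have p3: "(real i + 1) * \<theta> + y > 0" using pos th0 by (simp add: algebra_simps)
  define a where "a = real i * \<theta> + y"
  define L where "L = ln (1 + \<theta>^2)"
  have ap: "a > 0" using pos unfolding a_def .
  have b: "(real i + 1) * \<theta> + y = a + \<theta>" unfolding a_def by (simp add: algebra_simps)
  have e1: "1 + \<theta> * uu i y = (a+\<theta>)/a" using ap unfolding uu_def a_def[symmetric] by (simp add: field_simps)
  have "dens (uu i y) = \<theta> * a / ((a+\<theta>) * L)" unfolding dens_def e1 L_def[symmetric]
    using ap by (simp add: field_simps)
  have lL: "L > 0" using l unfolding L_def .
  have nz: "(a+\<theta>)*L \<noteq> 0" "a \<noteq> 0" "a+\<theta> \<noteq> 0" using lL ap th0 by auto
  have aux: "\<theta> * a / X / a^2 = \<theta> / (a * X)" if "X \<noteq> 0" for X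
    using that nz(2) by (simp add: field_simps power2_eq_square)
  have E1: "dens (uu i y) / a^2 = \<theta> / (a * (a+\<theta>) * L)"
    using aux[OF nz(1)] \<open>dens (uu i y) = \<theta> * a / ((a+\<theta>) * L)\<close> by (simp add: mult.assoc)
  have aux2: "\<theta> / (P * L) * (P / Q) = \<theta> / (Q * L)" if "P \<noteq> 0" for P Q
  proof -
    have "\<theta> / (P * L) * (P / Q) = (P * \<theta>) / (P * (L * Q))"
      by (simp add: times_divide_times_eq mult.commute mult.left_commute)
    also have "\<dots> = \<theta> / (L * Q)" using that by (rule mult_divide_mult_cancel_left)
    finally show ?thesis by (simp add: mult.commute)
  qed
  have E2: "dens y * ww i y = \<theta> / (a * (a+\<theta>) * L)"
    unfolding dens_def ww_def b a_def[symmetric] L_def[symmetric] using p2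
    by (intro aux2) auto
  show ?thesis using E1 E2 unfolding a_def by simp
qed

lemma ww_nonneg: "0 \<le> y \<Longrightarrow> 0 \<le> ww i y"
  using th0 by (simp add: ww_def)

lemma ww_sums: assumes "0 \<le> y" shows "(\<lambda>j. ww (j + m) y) sums 1"
proof -
  define f where "f n = (1 + \<theta> * y) / \<theta> * (1 / (real (n + m) * \<theta> + y))" for n
  have lim: "f \<longlonglongrightarrow> 0"
  proof -
    have "(\<lambda>n. 1 / (real (n + m) * \<theta> + y)) \<longlonglongrightarrow> 0"
    proof (rule LIMSEQ_I)
      fix r :: real assume r: "r > 0"
      obtain N :: nat where N: "real N > 1/(r*\<theta>)" using reals_Archimedean2 by blast
      show "\<exists>no. \<forall>n\<ge>no. norm (1 / (real (n + m) * \<theta> + y) - 0) < r"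
      proof (intro exI allI impI)
        fix n assume "n \<ge> N"
        define D where "D = real (n+m) * \<theta> + y"
        have "real (n+m) \<ge> real N" using \<open>n \<ge> N\<close> by simp
        then have "real (n+m) * \<theta> \<ge> real N * \<theta>" using th0 by (intro mult_right_mono) auto
        then have "D \<ge> real N * \<theta>" using assms unfolding D_def by linarith
        moreover have "real N * \<theta> > 1/r" using N r th0 by (simp add: field_simps)
        ultimately have D1: "D > 1/r" by linarith
        have Dp: "D > 0" using D1 r by (meson dual_order.strict_trans zero_less_divide_1_iff)
        have "r * D > r * (1/r)" using D1 r by (intro mult_strict_left_mono) auto
        then have "r * D > 1" using r by simp
        then have "1 / D < r" using Dp by (simp add: divide_less_eq mult.commute)
        then show "norm (1 / (real (n + m) * \<theta> + y) - 0) < r" using Dp unfolding D_def by simp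
      qed
    qed
    then show ?thesis unfolding f_def by (intro tendsto_mult_right_zero)
  qed
  have "(\<lambda>n. f n - f (Suc n)) sums (f 0 - 0)" by (rule telescope_sums'[OF lim])
  moreover have "f n - f (Suc n) = ww (n + m) y" for n
  proof -
    have p1: "real (n+m) * \<theta> + y > 0" using assms by (intro den_pos) auto
    have p2: "(real (n+m) + 1) * \<theta> + y > 0" using p1 th0 by (simp add: algebra_simps)
    define a where "a = real (n+m) * \<theta> + y"
    have b: "real (Suc n + m) * \<theta> + y = a + \<theta>" "(real (n+m) + 1) * \<theta> + y = a + \<theta>"
      unfolding a_def by (simp_all add: algebra_simps)
    have ap: "a > 0" using p1 unfolding a_def .
    have "1/a - 1/(a+\<theta>) = \<theta> / (a*(a+\<theta>))" using ap th0 by (simp add: field_simps)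
    then have "(1 + \<theta> * y) / \<theta> * (1/a) - (1 + \<theta> * y) / \<theta> * (1/(a+\<theta>))
        = (1 + \<theta> * y) / (a*(a+\<theta>))" using th0
      by (metis (no_types, lifting) right_diff_distrib times_divide_times_eq nonzero_mult_div_cancel_left
          less_irrefl mult.commute mult_1)
    then show ?thesis unfolding f_def ww_def b a_def[symmetric] by simp
  qed
  moreover have "f 0 = 1"
  proof -
    have "real m * \<theta> + y > 0" using assms by (intro den_pos) auto
    moreover have "\<theta> * (real m * \<theta> + y) = 1 + \<theta> * y" using mth by (simp add: algebra_simps)
    moreover have "\<theta> * y \<ge> 0" using th0 assms by simp
    ultimately show ?thesis unfolding f_def using th0 by (simp add: field_simps)
  qed
  ultimately show ?thesis by simp
qed

end

context tcf begin

definition PP :: "(real \<Rightarrow> ennreal) \<Rightarrow> real \<Rightarrow> ennreal" where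
  "PP f y = (\<Sum>j. ennreal (ww (j+m) y) * f (uu (j+m) y))"

abbreviation gam where "gam \<equiv> gamma_meas \<theta>"

lemma T_meas[measurable]: "T \<in> borel_measurable borel"
  unfolding T_map_def by measurable

lemma uu_meas[measurable]: "uu i \<in> borel_measurable borel" unfolding uu_def by measurable
lemma ww_meas[measurable]: "ww i \<in> borel_measurable borel" unfolding ww_def by measurable
lemma dens_meas[measurable]: "dens \<in> borel_measurable borel" unfolding dens_def by measurable

lemma PP_meas[measurable]: assumes [measurable]: "f \<in> borel_measurable borel"
  shows "PP f \<in> borel_measurable borel"
  unfolding PP_def by measurable

lemma Tpow_meas[measurable]: "(T ^^ j) \<in> borel_measurable borel"
  by (induct j) (auto simp del: funpow.simps simp: funpow_Suc_right intro: measurable_compose[OF T_meas])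

lemma Om_borel[measurable]: "Om \<in> sets borel" unfolding Om_def by simp

lemma gam_space: "space gam = Om"
  unfolding gamma_meas_def Om_def by simp

lemma gam_sets: "sets gam = sets (restrict_space borel Om)"
  unfolding gamma_meas_def Om_def by (simp add: sets_restrict_space)

lemma nn_gam: assumes [measurable]: "F \<in> borel_measurable borel"
  shows "(\<integral>\<^sup>+x. F x \<partial>gam) = (\<integral>\<^sup>+x. ennreal (dens x) * F x * indicator Om x \<partial>lborel)"
proof -
  have "(\<integral>\<^sup>+x. F x \<partial>gam) = (\<integral>\<^sup>+x. ennreal (dens x) * F x \<partial>restrict_space lborel Om)"
    unfolding gamma_meas_def dens_def[abs_def] Om_def
    by (subst nn_integral_density) (auto intro: measurable_restrict_space1)
  also have "\<dots> = (\<integral>\<^sup>+x. ennreal (dens x) * F x * indicator Om x \<partial>lborel)"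
    by (subst nn_integral_restrict_space) auto
  finally show ?thesis .
qed

end

context tcf begin

lemma branch:
  assumes i: "i \<ge> m" and [measurable]: "\<Psi> \<in> borel_measurable borel"
  shows "(\<integral>\<^sup>+x. \<Psi> x * indicator {uu i \<theta>..uu i 0} x \<partial>lborel)
       = (\<integral>\<^sup>+y. \<Psi> (uu i y) * ennreal (1 / (real i * \<theta> + y)^2) * indicator Om y \<partial>lborel)"
proof -
  define c where "c = real i * \<theta>"
  have cpos: "c > 0" using den_pos[OF i, of 0] unfolding c_def by simp
  define g where "g t = 1 / (c + \<theta> - t)" for t
  define g' where "g' t = 1 / (c + \<theta> - t)^2" for t
  have g0: "g 0 = uu i \<theta>" and g1: "g \<theta> = uu i 0" unfolding g_def uu_def c_def by simp_all
  have der: "(g has_real_derivative g' t) (at t)" if "t \<in> {0..\<theta>}" for t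
  proof -
    have nz: "c + \<theta> - t \<noteq> 0" using that cpos by auto
    show ?thesis unfolding g_def g'_def
      by (rule derivative_eq_intros refl | use nz in \<open>simp add: power2_eq_square\<close>)+
  qed
  have cont: "continuous_on {0..\<theta>} g'"
    unfolding g'_def using cpos by (intro continuous_intros) auto
  have nn: "g' t \<ge> 0" for t unfolding g'_def by simp
  have "(\<integral>\<^sup>+x. \<Psi> x * indicator {uu i \<theta>..uu i 0} x \<partial>lborel)
       = (\<integral>\<^sup>+t. \<Psi> (g t) * g' t * indicator {0..\<theta>} t \<partial>lborel)"
    unfolding g0[symmetric] g1[symmetric]
    by (rule nn_integral_substitution_aux[OF _ _ der cont nn th0]) auto
  also have "\<dots> = ennreal \<bar>-1\<bar> * (\<integral>\<^sup>+y. \<Psi> (g (\<theta> + (-1) * y)) * g' (\<theta> + (-1) * y)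
          * indicator {0..\<theta>} (\<theta> + (-1) * y) \<partial>lborel)"
    unfolding g_def g'_def by (rule nn_integral_real_affine) auto
  also have "\<dots> = (\<integral>\<^sup>+y. \<Psi> (uu i y) * ennreal (1 / (real i * \<theta> + y)^2) * indicator Om y \<partial>lborel)"
  proof -
    have "g (\<theta> + (-1) * y) = uu i y" "g' (\<theta> + (-1) * y) = 1 / (real i * \<theta> + y)^2"
      "indicator {0..\<theta>} (\<theta> + (-1) * y) = (indicator Om y :: ennreal)" for y
      unfolding g_def g'_def uu_def c_def Om_def by (auto simp: indicator_def)
    then show ?thesis by simp
  qed
  finally show ?thesis .
qed

lemma J_char: assumes i: "i \<ge> m"
  shows "x \<in> {uu i \<theta><..uu i 0} \<longleftrightarrow> (x > 0 \<and> \<lfloor>1/(\<theta>*x)\<rfloor> = int i)"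
proof
  have ip: "real i > 0" using i m0 by simp
  assume x: "x \<in> {uu i \<theta><..uu i 0}"
  have "uu i \<theta> > 0" using uu_pos[OF i, of \<theta>] th0 by simp
  then have xp: "x > 0" using x by simp
  have "x \<le> 1/(real i * \<theta>)" using x by (simp add: uu_def)
  then have "x * (real i * \<theta>) \<le> 1" using ip th0 by (simp add: le_divide_eq)
  then have a: "real i \<le> 1/(\<theta>*x)" using xp th0 by (simp add: le_divide_eq mult_ac)
  have "1/(real i * \<theta> + \<theta>) < x" using x by (simp add: uu_def)
  then have "1 < x * (real i * \<theta> + \<theta>)" using ip th0
    by (simp add: divide_less_eq mult_ac add_pos_pos)
  then have b: "1/(\<theta>*x) < real i + 1" using xp th0 by (simp add: divide_less_eq algebra_simps)
  show "x > 0 \<and> \<lfloor>1/(\<theta>*x)\<rfloor> = int i" using a b xp by (simp add: floor_eq_iff)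
next
  have ip: "real i > 0" using i m0 by simp
  assume "x > 0 \<and> \<lfloor>1/(\<theta>*x)\<rfloor> = int i"
  then have xp: "x > 0" and a: "real i \<le> 1/(\<theta>*x)" and b: "1/(\<theta>*x) < real i + 1"
    by (auto simp: floor_eq_iff)
  from a have "x * (real i * \<theta>) \<le> 1" using xp th0 by (simp add: le_divide_eq mult_ac)
  then have "x \<le> 1/(real i * \<theta>)" using ip th0 by (simp add: le_divide_eq)
  moreover from b have "1 < x * (real i * \<theta> + \<theta>)" using xp th0 by (simp add: divide_less_eq algebra_simps)
  then have "1/(real i * \<theta> + \<theta>) < x" using ip th0
    by (simp add: divide_less_eq mult_ac add_pos_pos)
  ultimately show "x \<in> {uu i \<theta><..uu i 0}" by (simp add: uu_def)
qed

lemma Om_char: "(x \<in> Om \<and> x \<noteq> 0) \<longleftrightarrow> (x > 0 \<and> \<lfloor>1/(\<theta>*x)\<rfloor> \<ge> int m)"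
proof
  assume x: "x \<in> Om \<and> x \<noteq> 0"
  then have xp: "x > 0" and "x \<le> \<theta>" by (auto simp: Om_def)
  then have "\<theta> * x \<le> \<theta> * \<theta>" using th0 by simp
  then have "1/(\<theta>*\<theta>) \<le> 1/(\<theta>*x)" using xp th0 by (intro divide_left_mono) auto
  moreover have "1/(\<theta>*\<theta>) = real m" using mth th0 by (simp add: field_simps)
  ultimately have "real m \<le> 1/(\<theta>*x)" by simp
  then show "x > 0 \<and> \<lfloor>1/(\<theta>*x)\<rfloor> \<ge> int m" using xp by (simp add: le_floor_iff)
next
  assume x: "x > 0 \<and> \<lfloor>1/(\<theta>*x)\<rfloor> \<ge> int m"
  then have xp: "x > 0" and "real m \<le> 1/(\<theta>*x)" by (auto simp: le_floor_iff)
  then have "real m * (\<theta> * x) \<le> 1" using th0 by (simp add: le_divide_eq)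
  then have "x * (real m * \<theta> * \<theta>) \<le> \<theta>" using th0
    by (metis (no_types, opaque_lifting) mult.commute mult.left_commute mult_left_mono less_imp_le mult_1_right)
  then have "x \<le> \<theta>" using mth by simp
  then show "x \<in> Om \<and> x \<noteq> 0" using xp by (simp add: Om_def)
qed

lemma ind_sum: assumes "x \<noteq> 0"
  shows "(indicator Om x :: ennreal) = (\<Sum>j. indicator {uu (j+m) \<theta><..uu (j+m) 0} x)"
proof (cases "x > 0 \<and> \<lfloor>1/(\<theta>*x)\<rfloor> \<ge> int m")
  case True
  define k where "k = nat \<lfloor>1/(\<theta>*x)\<rfloor> - m"
  have e: "(indicator {uu (j+m) \<theta><..uu (j+m) 0} x :: ennreal) = (if j = k then 1 else 0)" for j
  proof -
    have tx: "\<theta> * x > 0" using True th0 by simp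
    have "int (j+m) = \<lfloor>1/(\<theta>*x)\<rfloor> \<longleftrightarrow> j = k" unfolding k_def using True tx by auto
    then show ?thesis using J_char[of "j+m" x] True by (auto simp: indicator_def)
  qed
  have "(\<lambda>j. if j = k then (1::ennreal) else 0) sums 1"
    using sums_single[of k "\<lambda>_. 1::ennreal"] by simp
  then have "(\<Sum>j. indicator {uu (j+m) \<theta><..uu (j+m) 0} x) = (1::ennreal)"
    unfolding e by (rule sums_unique[symmetric])
  moreover have "x \<in> Om" using Om_char True by blast
  ultimately show ?thesis by simp
next
  case False
  then have "(indicator {uu (j+m) \<theta><..uu (j+m) 0} x :: ennreal) = 0" for j
    using J_char[of "j+m" x] by (auto simp: indicator_def)
  moreover have "x \<notin> Om" using Om_char False assms by blast
  ultimately show ?thesis by simp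
qed

lemma T_on_J: assumes "i \<ge> m" "x \<in> {uu i \<theta><..uu i 0}" shows "T x = 1/x - real i * \<theta>"
proof -
  have "x > 0" "\<lfloor>1/(\<theta>*x)\<rfloor> = int i" using J_char[OF assms(1)] assms(2) by auto
  then show ?thesis by (simp add: T_map_def)
qed

end

context tcf begin

lemma dens_nonneg: assumes "0 \<le> y" shows "0 \<le> dens y"
proof -
  have "ln (1 + \<theta>^2) > 0" using th0 by (intro ln_gt_zero) simp
  moreover have "1 + \<theta> * y > 0" using assms th0 by (smt (verit) mult_nonneg_nonneg)
  ultimately show ?thesis unfolding dens_def using th0 by simp
qed

lemma term_eq: assumes i: "i \<ge> m" and y: "y \<in> Om"
  shows "ennreal (dens (uu i y)) * ennreal (1 / (real i * \<theta> + y)^2)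
       = ennreal (dens y) * ennreal (ww i y)"
proof -
  have y0: "0 \<le> y" using y by (simp add: Om_def)
  have "ennreal (dens (uu i y)) * ennreal (1 / (real i * \<theta> + y)^2)
      = ennreal (dens (uu i y) * (1 / (real i * \<theta> + y)^2))"
  proof -
    have "0 \<le> dens (uu i y)" using dens_nonneg uu_pos[OF i y0] by simp
    then show ?thesis by (subst ennreal_mult) auto
  qed
  also have "\<dots> = ennreal (dens y * ww i y)" using dens_ww[OF i y0] by simp
  also have "\<dots> = ennreal (dens y) * ennreal (ww i y)"
    using dens_nonneg[OF y0] ww_nonneg[OF y0] by (simp add: ennreal_mult)
  finally show ?thesis .
qed

lemma transfer:
  assumes [measurable]: "f \<in> borel_measurable borel" "h \<in> borel_measurable borel"
  shows "(\<integral>\<^sup>+x. h (T x) * f x \<partial>gam) = (\<integral>\<^sup>+y. h y * PP f y \<partial>gam)"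
proof -
  define \<Psi> where "\<Psi> i x = ennreal (dens x) * h (1/x - real i * \<theta>) * f x" for i x
  have [measurable]: "\<Psi> i \<in> borel_measurable borel" for i unfolding \<Psi>_def by measurable
  have "(\<integral>\<^sup>+x. h (T x) * f x \<partial>gam) = (\<integral>\<^sup>+x. ennreal (dens x) * (h (T x) * f x) * indicator Om x \<partial>lborel)"
    by (rule nn_gam) measurable
  also have "\<dots> = (\<integral>\<^sup>+x. (\<Sum>j. \<Psi> (j+m) x * indicator {uu (j+m) \<theta>..uu (j+m) 0} x) \<partial>lborel)"
  proof (rule nn_integral_cong_AE)
    have "AE x in lborel. \<forall>j. x \<noteq> uu (j+m) \<theta>"
      by (subst AE_all_countable) (auto intro: AE_lborel_singleton)
    moreover have "AE x in lborel. x \<noteq> 0" by (rule AE_lborel_singleton)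
    ultimately show "AE x in lborel. ennreal (dens x) * (h (T x) * f x) * indicator Om x
        = (\<Sum>j. \<Psi> (j+m) x * indicator {uu (j+m) \<theta>..uu (j+m) 0} x)"
    proof eventually_elim
      case (elim x)
      have "ennreal (dens x) * (h (T x) * f x) * indicator Om x
          = ennreal (dens x) * (h (T x) * f x) * (\<Sum>j. indicator {uu (j+m) \<theta><..uu (j+m) 0} x)"
        using ind_sum[of x] elim by simp
      also have "\<dots> = (\<Sum>j. ennreal (dens x) * (h (T x) * f x) * indicator {uu (j+m) \<theta><..uu (j+m) 0} x)"
        by simp
      also have "\<dots> = (\<Sum>j. \<Psi> (j+m) x * indicator {uu (j+m) \<theta>..uu (j+m) 0} x)"
      proof (rule suminf_cong)
        fix j
        show "ennreal (dens x) * (h (T x) * f x) * indicator {uu (j+m) \<theta><..uu (j+m) 0} x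
            = \<Psi> (j+m) x * indicator {uu (j+m) \<theta>..uu (j+m) 0} x"
        proof (cases "x \<in> {uu (j+m) \<theta><..uu (j+m) 0}")
          case True
          then show ?thesis using T_on_J[of "j+m" x] by (simp add: \<Psi>_def mult_ac)
        next
          case False
          then have "x \<notin> {uu (j+m) \<theta>..uu (j+m) 0}" using elim by auto
          then show ?thesis using False by simp
        qed
      qed
      finally show ?case .
    qed
  qed
  also have "\<dots> = (\<Sum>j. \<integral>\<^sup>+x. \<Psi> (j+m) x * indicator {uu (j+m) \<theta>..uu (j+m) 0} x \<partial>lborel)"
    by (rule nn_integral_suminf) measurable
  also have "\<dots> = (\<Sum>j. \<integral>\<^sup>+y. \<Psi> (j+m) (uu (j+m) y) * ennreal (1 / (real (j+m) * \<theta> + y)^2)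
       * indicator Om y \<partial>lborel)"
    by (intro suminf_cong branch) auto
  also have "\<dots> = (\<integral>\<^sup>+y. (\<Sum>j. \<Psi> (j+m) (uu (j+m) y) * ennreal (1 / (real (j+m) * \<theta> + y)^2)
       * indicator Om y) \<partial>lborel)"
    by (rule nn_integral_suminf[symmetric]) measurable
  also have "\<dots> = (\<integral>\<^sup>+y. ennreal (dens y) * (h y * PP f y) * indicator Om y \<partial>lborel)"
  proof (rule nn_integral_cong)
    fix y
    show "(\<Sum>j. \<Psi> (j+m) (uu (j+m) y) * ennreal (1 / (real (j+m) * \<theta> + y)^2) * indicator Om y)
        = ennreal (dens y) * (h y * PP f y) * indicator Om y"
    proof (cases "y \<in> Om")
      case True
      have y0: "0 \<le> y" using True by (simp add: Om_def)
      have "\<Psi> (j+m) (uu (j+m) y) * ennreal (1 / (real (j+m) * \<theta> + y)^2) * indicator Om y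
          = ennreal (dens y) * h y * (ennreal (ww (j+m) y) * f (uu (j+m) y))" for j
      proof -
        have "1 / uu (j+m) y - real (j+m) * \<theta> = y"
          using den_pos[of "j+m" y] y0 by (simp add: uu_def)
        then have "\<Psi> (j+m) (uu (j+m) y) * ennreal (1 / (real (j+m) * \<theta> + y)^2) * indicator Om y
           = (ennreal (dens (uu (j+m) y)) * ennreal (1 / (real (j+m) * \<theta> + y)^2)) * h y * f (uu (j+m) y)"
          using True by (simp add: \<Psi>_def mult_ac)
        also have "\<dots> = ennreal (dens y) * ennreal (ww (j+m) y) * h y * f (uu (j+m) y)"
          using term_eq[of "j+m" y] True by simp
        finally show ?thesis by (simp add: mult_ac)
      qed
      then have "(\<Sum>j. \<Psi> (j+m) (uu (j+m) y) * ennreal (1 / (real (j+m) * \<theta> + y)^2) * indicator Om y)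
          = (\<Sum>j. ennreal (dens y) * h y * (ennreal (ww (j+m) y) * f (uu (j+m) y)))" by simp
      also have "\<dots> = ennreal (dens y) * h y * PP f y" unfolding PP_def by simp
      finally show ?thesis using True by (simp add: mult_ac)
    next
      case False
      then show ?thesis by simp
    qed
  qed
  also have "\<dots> = (\<integral>\<^sup>+y. h y * PP f y \<partial>gam)"
    by (rule nn_gam[symmetric]) measurable
  finally show ?thesis .
qed

end

context tcf begin

lemma gam_Om: "emeasure gam Om = 1"
proof -
  define L where "L = ln (1 + \<theta>^2)"
  have Lp: "L > 0" unfolding L_def using th0 by (intro ln_gt_zero) simp
  have "emeasure gam Om = (\<integral>\<^sup>+x. indicator Om x \<partial>gam)"
    by (subst nn_integral_indicator) (auto simp: gam_sets sets_restrict_space_iff)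
  also have "\<dots> = (\<integral>\<^sup>+x. ennreal (dens x) * indicator Om x * indicator Om x \<partial>lborel)"
    by (rule nn_gam) measurable
  also have "\<dots> = (\<integral>\<^sup>+x. ennreal (dens x) * indicator {0..\<theta>} x \<partial>lborel)"
    by (intro nn_integral_cong) (auto simp: Om_def indicator_def)
  also have "\<dots> = ln (1 + \<theta> * \<theta>) / L - ln (1 + \<theta> * 0) / L"
  proof (rule nn_integral_FTC_Icc)
    show "dens \<in> borel_measurable borel" by measurable
    show "0 \<le> \<theta>" using th0 by simp
    fix x assume x: "x \<in> {0..\<theta>}"
    then have p: "1 + \<theta> * x > 0" using th0 by (smt (verit) atLeastAtMost_iff mult_nonneg_nonneg)
    show "0 \<le> dens x" using x dens_nonneg by simp
    show "((\<lambda>x. ln (1 + \<theta> * x) / L) has_real_derivative dens x) (at x)"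
      unfolding dens_def L_def[symmetric]
      using p Lp by (auto intro!: derivative_eq_intros simp: divide_simps)
  qed
  also have "\<dots> = 1" using Lp unfolding L_def by (simp add: power2_eq_square)
  finally show ?thesis by simp
qed

lemma prob_gam: "prob_space gam"
  by (rule prob_spaceI) (simp add: gam_space gam_Om)

lemma sets_gamI: "E \<in> sets borel \<Longrightarrow> E \<inter> Om \<in> sets gam"
  by (auto simp: gam_sets sets_restrict_space_iff)

lemma Tpow_Om: "x \<in> Om \<Longrightarrow> (T ^^ j) x \<in> Om"
  by (induct j) (auto intro: T_Om)

lemma PP_cong: assumes "\<And>x. x \<in> Om \<Longrightarrow> f x = f' x" "y \<in> Om" shows "PP f y = PP f' y"
  unfolding PP_def using assms uu_Om by simp

lemma PP_one: assumes "y \<in> Om" shows "PP (\<lambda>_. 1) y = 1"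
proof -
  have y0: "0 \<le> y" using assms by (simp add: Om_def)
  have "PP (\<lambda>_. 1) y = (\<Sum>j. ennreal (ww (j+m) y))" unfolding PP_def by simp
  also have "\<dots> = ennreal (\<Sum>j. ww (j+m) y)"
    using ww_nonneg[OF y0] ww_sums[OF y0] by (intro suminf_ennreal2) (auto simp: sums_iff)
  also have "\<dots> = 1" using ww_sums[OF y0] by (simp add: sums_iff)
  finally show ?thesis .
qed

lemma PP_const: assumes "y \<in> Om" shows "PP (\<lambda>_. c) y = c"
proof -
  have "PP (\<lambda>_. c) y = (\<Sum>j. ennreal (ww (j+m) y) * 1) * c" unfolding PP_def by simp
  also have "\<dots> = PP (\<lambda>_. 1) y * c" unfolding PP_def by simp
  finally show ?thesis using PP_one[OF assms] by simp
qed

lemma PPpow_meas[measurable]: "f \<in> borel_measurable borel \<Longrightarrow> (PP ^^ j) f \<in> borel_measurable borel"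
  by (induct j) auto

lemma PPpow_cong: assumes "\<And>x. x \<in> Om \<Longrightarrow> f x = f' x" "y \<in> Om" shows "(PP ^^ j) f y = (PP ^^ j) f' y"
  using assms(2) proof (induct j arbitrary: y)
  case 0 then show ?case using assms(1) by simp
next
  case (Suc j)
  have "(PP ^^ Suc j) f y = PP ((PP ^^ j) f) y" by simp
  also have "\<dots> = PP ((PP ^^ j) f') y" using Suc by (intro PP_cong) auto
  finally show ?case by simp
qed

lemma PPpow_one: "y \<in> Om \<Longrightarrow> (PP ^^ j) (\<lambda>_. 1) y = 1"
proof (induct j arbitrary: y)
  case 0 then show ?case by simp
next
  case (Suc j)
  have "(PP ^^ Suc j) (\<lambda>_. 1) y = PP ((PP ^^ j) (\<lambda>_. 1)) y" by simp
  also have "\<dots> = PP (\<lambda>_. 1) y" using Suc by (intro PP_cong) auto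
  finally show ?case using PP_one Suc by simp
qed

lemma transfer_pow:
  assumes [measurable]: "f \<in> borel_measurable borel" "h \<in> borel_measurable borel"
  shows "(\<integral>\<^sup>+x. h ((T ^^ j) x) * f x \<partial>gam) = (\<integral>\<^sup>+y. h y * (PP ^^ j) f y \<partial>gam)"
  using assms(1) proof (induct j arbitrary: f)
  case 0 then show ?case by simp
next
  case (Suc j)
  note [measurable] = Suc.prems
  have "(\<integral>\<^sup>+x. h ((T ^^ Suc j) x) * f x \<partial>gam) = (\<integral>\<^sup>+x. (\<lambda>z. h ((T ^^ j) z)) (T x) * f x \<partial>gam)"
    by (simp add: funpow_Suc_right del: funpow.simps)
  also have "\<dots> = (\<integral>\<^sup>+y. h ((T ^^ j) y) * PP f y \<partial>gam)"
    by (rule transfer) measurable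
  also have "\<dots> = (\<integral>\<^sup>+y. h y * (PP ^^ j) (PP f) y \<partial>gam)"
    by (rule Suc.hyps) measurable
  also have "\<dots> = (\<integral>\<^sup>+y. h y * (PP ^^ Suc j) f y \<partial>gam)"
    by (simp add: funpow_Suc_right del: funpow.simps)
  finally show ?case .
qed

lemma invariance: assumes [measurable]: "E \<in> sets borel"
  shows "emeasure gam ((T ^^ j) -` E \<inter> Om) = emeasure gam (E \<inter> Om)"
proof -
  have m1: "(T ^^ j) -` E \<inter> Om \<in> sets gam"
  proof -
    have "(T ^^ j) -` E \<in> sets borel" using measurable_sets[OF Tpow_meas[of j] assms] by simp
    then show ?thesis by (rule sets_gamI)
  qed
  have "emeasure gam ((T ^^ j) -` E \<inter> Om) = (\<integral>\<^sup>+x. indicator ((T ^^ j) -` E \<inter> Om) x \<partial>gam)"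
    using m1 by simp
  also have "\<dots> = (\<integral>\<^sup>+x. indicator E ((T ^^ j) x) * 1 \<partial>gam)"
    by (intro nn_integral_cong) (auto simp: gam_space indicator_def)
  also have "\<dots> = (\<integral>\<^sup>+y. indicator E y * (PP ^^ j) (\<lambda>_. 1) y \<partial>gam)"
    by (rule transfer_pow) measurable
  also have "\<dots> = (\<integral>\<^sup>+y. indicator (E \<inter> Om) y \<partial>gam)"
    by (intro nn_integral_cong) (auto simp: gam_space indicator_def PPpow_one)
  also have "\<dots> = emeasure gam (E \<inter> Om)" using sets_gamI[OF assms] by simp
  finally show ?thesis .
qed

end

lemma ennreal_suminf_swap: "(\<Sum>i. \<Sum>j. f i j :: ennreal) = (\<Sum>j. \<Sum>i. f i j)"
proof -
  have "(\<Sum>i. \<Sum>j. f i j) = (\<integral>\<^sup>+i. (\<Sum>j. f i j) \<partial>count_space UNIV)"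
    by (rule nn_integral_count_space_nat[symmetric])
  also have "\<dots> = (\<Sum>j. \<integral>\<^sup>+i. f i j \<partial>count_space UNIV)"
    by (rule nn_integral_suminf) auto
  also have "\<dots> = (\<Sum>j. \<Sum>i. f i j)" by (simp add: nn_integral_count_space_nat)
  finally show ?thesis .
qed

context tcf begin

definition GG :: "real set" where "GG = {y \<in> Om. \<forall>j. (T ^^ j) y \<in> {0<..<\<theta>}}"

lemma GG_Om: "y \<in> GG \<Longrightarrow> y \<in> Om" unfolding GG_def by auto

lemma GG_int: "y \<in> GG \<Longrightarrow> 0 < y \<and> y < \<theta>"
  unfolding GG_def by (metis (no_types, lifting) funpow_0 greaterThanLessThan_iff mem_Collect_eq)

lemma uu_GG: assumes i: "i \<ge> m" and y: "y \<in> GG" shows "uu i y \<in> GG"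
proof -
  have y1: "0 < y" "y < \<theta>" using GG_int[OF y] by auto
  have "(T ^^ j) (uu i y) \<in> {0<..<\<theta>}" for j
  proof (cases j)
    case 0 then show ?thesis using uu_pos[OF i] uu_lt[OF i] y1 by simp
  next
    case (Suc j')
    have "(T ^^ j) (uu i y) = (T ^^ j') (T (uu i y))" unfolding Suc by (simp add: funpow_Suc_right del: funpow.simps)
    also have "\<dots> = (T ^^ j') y" using T_uu[OF i] y1 by simp
    finally show ?thesis using y unfolding GG_def by auto
  qed
  then show ?thesis unfolding GG_def using uu_Om[OF i GG_Om[OF y]] by auto
qed

lemma null_pts: "emeasure gam ({0, \<theta>} \<inter> Om) = 0"
proof -
  have "emeasure gam ({0, \<theta>} \<inter> Om) = (\<integral>\<^sup>+x. indicator ({0, \<theta>} \<inter> Om) x \<partial>gam)"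
    using sets_gamI[of "{0, \<theta>}"] by simp
  also have "\<dots> = (\<integral>\<^sup>+x. ennreal (dens x) * indicator ({0, \<theta>} \<inter> Om) x * indicator Om x \<partial>lborel)"
    by (rule nn_gam) measurable
  also have "\<dots> = (\<integral>\<^sup>+(x::real). 0 \<partial>lborel)"
  proof (rule nn_integral_cong_AE)
    have "AE x in lborel. x \<noteq> 0" "AE x in lborel. x \<noteq> \<theta>" by (rule AE_lborel_singleton)+
    then show "AE x in lborel. ennreal (dens x) * indicator ({0, \<theta>} \<inter> Om) x * indicator Om x = 0"
      by eventually_elim (auto simp: indicator_def)
  qed
  finally show ?thesis by simp
qed

lemma AE_GG: "AE y in gam. y \<in> GG"
proof -
  have "AE y in gam. (T ^^ j) y \<notin> {0, \<theta>}" for j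
  proof (rule AE_I')
    show "(T ^^ j) -` {0, \<theta>} \<inter> Om \<in> null_sets gam"
    proof -
      have b: "{0, \<theta>} \<in> sets (borel :: real measure)" by simp
      have "(T ^^ j) -` {0, \<theta>} \<in> sets borel" using measurable_sets[OF Tpow_meas[of j] b] by simp
      then have "(T ^^ j) -` {0, \<theta>} \<inter> Om \<in> sets gam" by (rule sets_gamI)
      moreover have "emeasure gam ((T ^^ j) -` {0, \<theta>} \<inter> Om) = 0"
        using invariance[OF b, of j] null_pts by simp
      ultimately show ?thesis by (auto intro: null_setsI)
    qed
    show "{y \<in> space gam. \<not> (T ^^ j) y \<notin> {0, \<theta>}} \<subseteq> (T ^^ j) -` {0, \<theta>} \<inter> Om"
      by (auto simp: gam_space)
  qed
  then have "AE y in gam. \<forall>j. (T ^^ j) y \<notin> {0, \<theta>}" by (subst AE_all_countable) auto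
  moreover have "AE y in gam. y \<in> space gam" by (rule AE_space)
  ultimately show ?thesis
  proof eventually_elim
    case (elim y)
    then have "y \<in> Om" by (simp add: gam_space)
    then have "(T ^^ j) y \<in> Om" for j by (rule Tpow_Om)
    then have "(T ^^ j) y \<in> {0<..<\<theta>}" for j using elim(1)[rule_format, of j]
      by (auto simp: Om_def less_le)
    then show "y \<in> GG" using \<open>y \<in> Om\<close> by (simp add: GG_def)
  qed
qed

definition dep :: "nat \<Rightarrow> (real \<Rightarrow> 'a) \<Rightarrow> bool" where
  "dep k F \<longleftrightarrow> (\<forall>x\<in>GG. \<forall>x'\<in>GG. (\<forall>i\<in>{1..k}. digit \<theta> i x = digit \<theta> i x') \<longrightarrow> F x = F x')"

lemma digit_uu_GG: assumes "i \<ge> m" "y \<in> GG"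
  shows "digit \<theta> 1 (uu i y) = int i" "s \<ge> 1 \<Longrightarrow> digit \<theta> (Suc s) (uu i y) = digit \<theta> s y"
  using GG_int[OF assms(2)] digit1_uu[OF assms(1)] digit_Suc T_uu[OF assms(1)] by auto

lemma dep_uu: assumes "dep (Suc k) F" "i \<ge> m" shows "dep k (\<lambda>y. F (uu i y))"
  unfolding dep_def
proof (intro ballI impI)
  fix x x' assume x: "x \<in> GG" "x' \<in> GG" and ag: "\<forall>s\<in>{1..k}. digit \<theta> s x = digit \<theta> s x'"
  have "\<forall>s\<in>{1..Suc k}. digit \<theta> s (uu i x) = digit \<theta> s (uu i x')"
  proof
    fix s assume s: "s \<in> {1..Suc k}"
    show "digit \<theta> s (uu i x) = digit \<theta> s (uu i x')"
    proof (cases "s = 1")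
      case True then show ?thesis using digit_uu_GG[OF assms(2)] x by simp
    next
      case False
      then obtain s' where s': "s = Suc s'" "s' \<in> {1..k}" using s by (cases s) auto
      then show ?thesis using digit_uu_GG[OF assms(2)] x ag by simp
    qed
  qed
  then show "F (uu i x) = F (uu i x')" using assms(1) uu_GG[OF assms(2)] x unfolding dep_def by blast
qed

lemma dep_sigma: assumes "A \<in> digit_sigma \<theta> {1..k}" shows "dep k (indicator A :: real \<Rightarrow> ennreal)"
proof -
  have H: "\<forall>x\<in>GG. \<forall>x'\<in>GG. (\<forall>i\<in>{1..k}. digit \<theta> i x = digit \<theta> i x') \<longrightarrow> (x \<in> A \<longleftrightarrow> x' \<in> A)"
    using assms unfolding digit_sigma_def
  proof (induct rule: sigma_sets.induct)
    case (Basic a)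
    then obtain i D where a: "a = digit \<theta> i -` D \<inter> {0..\<theta>}" "i \<in> {1..k}" by blast
    then show ?case using GG_Om by (auto simp: Om_def)
  next
    case Empty then show ?case by simp
  next
    case (Compl a)
    show ?case
    proof (intro ballI impI)
      fix x x' assume xx: "x \<in> GG" "x' \<in> GG" and ag: "\<forall>i\<in>{1..k}. digit \<theta> i x = digit \<theta> i x'"
      have "x \<in> a \<longleftrightarrow> x' \<in> a" using Compl.hyps(2) xx ag by blast
      moreover have "x \<in> {0..\<theta>}" "x' \<in> {0..\<theta>}" using GG_Om xx unfolding Om_def by auto
      ultimately show "x \<in> {0..\<theta>} - a \<longleftrightarrow> x' \<in> {0..\<theta>} - a" by blast
    qed
  next
    case (Union a) then show ?case by blast
  qed
  show ?thesis unfolding dep_def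
  proof (intro ballI impI)
    fix x x' assume "x \<in> GG" "x' \<in> GG" "\<forall>i\<in>{1..k}. digit \<theta> i x = digit \<theta> i x'"
    then have "x \<in> A \<longleftrightarrow> x' \<in> A" using H by blast
    then show "(indicator A x :: ennreal) = indicator A x'" by (simp add: indicator_def)
  qed
qed

definition cone :: "real \<Rightarrow> (real \<Rightarrow> ennreal) \<Rightarrow> bool" where
  "cone a f \<longleftrightarrow> (\<forall>x\<in>GG. \<forall>y\<in>GG. f x \<le> ennreal (exp (a * \<bar>x - y\<bar>)) * f y)"

lemma cone_mult_dep0: assumes "cone a h" "dep 0 F" shows "cone a (\<lambda>x. h x * F x)"
  unfolding cone_def
proof (intro ballI)
  fix x y assume xy: "x \<in> GG" "y \<in> GG"
  have "\<forall>i\<in>{1..(0::nat)}. digit \<theta> i x = digit \<theta> i y" by simp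
  then have "F x = F y" using assms(2) xy unfolding dep_def by blast
  moreover have "h x \<le> ennreal (exp (a * \<bar>x - y\<bar>)) * h y" using assms(1) xy unfolding cone_def by auto
  ultimately show "h x * F x \<le> ennreal (exp (a * \<bar>x - y\<bar>)) * (h y * F y)"
    by (metis mult.assoc mult_right_mono zero_le)
qed

lemma cone_suminf: assumes "\<And>j. cone a (f j)" shows "cone a (\<lambda>x. \<Sum>j. f j x)"
  unfolding cone_def
proof (intro ballI)
  fix x y assume xy: "x \<in> GG" "y \<in> GG"
  have "(\<Sum>j. f j x) \<le> (\<Sum>j. ennreal (exp (a * \<bar>x - y\<bar>)) * f j y)"
    using assms xy unfolding cone_def by (intro suminf_le) auto
  also have "\<dots> = ennreal (exp (a * \<bar>x - y\<bar>)) * (\<Sum>j. f j y)" by simp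
  finally show "(\<Sum>j. f j x) \<le> ennreal (exp (a * \<bar>x - y\<bar>)) * (\<Sum>j. f j y)" .
qed

lemma lip1: fixes P Q c k d :: real
  assumes "0 < P" "Q \<le> P + c * d" "c \<le> k * P" "0 \<le> d" "0 \<le> c"
  shows "Q \<le> P * exp (k * d)"
proof -
  have "c * d \<le> k * P * d" using assms by (intro mult_right_mono) auto
  then have "Q \<le> P * (1 + k * d)" using assms by (simp add: algebra_simps)
  also have "\<dots> \<le> P * exp (k * d)" using assms(1) by (intro mult_left_mono) (auto simp: exp_ge_add_one_self)
  finally show ?thesis .
qed

lemma ww_lip: assumes i: "i \<ge> m" and x: "x \<in> Om" and y: "y \<in> Om"
  shows "ww i x \<le> exp (3 * \<theta> * \<bar>x - y\<bar>) * ww i y"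
proof -
  define d where "d = \<bar>x - y\<bar>"
  define E where "E = exp (\<theta> * d)"
  have x0: "0 \<le> x" and y0: "0 \<le> y" using x y by (auto simp: Om_def)
  have d0: "0 \<le> d" unfolding d_def by simp
  have ax: "real i * \<theta> + x > 0" and ay: "real i * \<theta> + y > 0" using den_pos[OF i] x0 y0 by auto
  have bx: "(real i + 1) * \<theta> + x > 0" and by': "(real i + 1) * \<theta> + y > 0" using ax ay th0
    by (simp_all add: algebra_simps)
  have fx: "1 + \<theta> * x > 0" and fy: "1 + \<theta> * y > 0" using x0 y0 th0
    by (smt (verit) mult_nonneg_nonneg)+
  have im: "real i * \<theta> * \<theta> \<ge> 1"
  proof -
    have "real i * \<theta> * \<theta> \<ge> real m * \<theta> * \<theta>" using i th0 by (simp add: mult_right_mono)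
    then show ?thesis using mth by simp
  qed
  have e1: "1 + \<theta> * x \<le> (1 + \<theta> * y) * E" unfolding E_def
  proof (rule lip1[OF fy _ _ d0, of _ \<theta>])
    show "1 + \<theta> * x \<le> 1 + \<theta> * y + \<theta> * d" unfolding d_def using th0
      by (smt (verit, best) abs_ge_self mult_left_mono right_diff_distrib)
    show "\<theta> \<le> \<theta> * (1 + \<theta> * y)" using th0 fy y0 by (simp add: algebra_simps)
    show "0 \<le> \<theta>" using th0 by simp
  qed
  have e2: "real i * \<theta> + y \<le> (real i * \<theta> + x) * E" unfolding E_def
  proof (rule lip1[OF ax _ _ d0, of _ 1])
    show "real i * \<theta> + y \<le> real i * \<theta> + x + 1 * d" unfolding d_def by simp
    have tx: "\<theta> * x \<ge> 0" using th0 x0 by simp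
    have "\<theta> * (real i * \<theta> + x) = real i * \<theta> * \<theta> + \<theta> * x" by (simp add: algebra_simps)
    then show "1 \<le> \<theta> * (real i * \<theta> + x)" using im tx by linarith
  qed simp
  have e3: "(real i + 1) * \<theta> + y \<le> ((real i + 1) * \<theta> + x) * E" unfolding E_def
  proof (rule lip1[OF bx _ _ d0, of _ 1])
    show "(real i + 1) * \<theta> + y \<le> (real i + 1) * \<theta> + x + 1 * d" unfolding d_def by simp
    have tx: "\<theta> * x \<ge> 0" "\<theta> * \<theta> \<ge> 0" using th0 x0 by simp_all
    have "\<theta> * ((real i + 1) * \<theta> + x) = real i * \<theta> * \<theta> + \<theta> * \<theta> + \<theta> * x" by (simp add: algebra_simps)
    then show "1 \<le> \<theta> * ((real i + 1) * \<theta> + x)" using im tx by linarith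
  qed simp
  have Ep: "E > 0" unfolding E_def by simp
  have "(1 + \<theta> * x) * ((real i * \<theta> + y) * ((real i + 1) * \<theta> + y))
      \<le> ((1 + \<theta> * y) * E) * (((real i * \<theta> + x) * E) * (((real i + 1) * \<theta> + x) * E))"
    using e1 e2 e3 fx ay by' by (intro mult_mono) (auto intro: mult_pos_pos less_imp_le)
  also have "\<dots> = E^3 * (1 + \<theta> * y) * ((real i * \<theta> + x) * ((real i + 1) * \<theta> + x))"
    by (simp add: power3_eq_cube mult_ac)
  finally have main: "(1 + \<theta> * x) * ((real i * \<theta> + y) * ((real i + 1) * \<theta> + y))
      \<le> E^3 * (1 + \<theta> * y) * ((real i * \<theta> + x) * ((real i + 1) * \<theta> + x))" .
  have "ww i x \<le> E^3 * ww i y"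
    unfolding ww_def using main ax ay bx by'
    by (simp add: divide_simps mult_pos_pos)
  moreover have "E^3 = exp (3 * \<theta> * \<bar>x - y\<bar>)" unfolding E_def d_def
    by (simp add: exp_of_nat_mult[symmetric] mult_ac)
  ultimately show ?thesis by simp
qed

lemma uu_contr: assumes i: "i \<ge> m" and x: "x \<in> Om" and y: "y \<in> Om"
  shows "\<bar>uu i x - uu i y\<bar> \<le> \<theta>^2 * \<bar>x - y\<bar>"
proof -
  have x0: "0 \<le> x" and y0: "0 \<le> y" using x y by (auto simp: Om_def)
  have ax: "real i * \<theta> + x > 0" and ay: "real i * \<theta> + y > 0" using den_pos[OF i] x0 y0 by auto
  have im: "real i * \<theta> \<ge> 1/\<theta>"
  proof -
    have "real i * \<theta> \<ge> real m * \<theta>" using i th0 by (simp add: mult_right_mono)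
    then show ?thesis using mth' by simp
  qed
  have "(real i * \<theta> + x) * (real i * \<theta> + y) \<ge> (1/\<theta>) * (1/\<theta>)"
    using im x0 y0 th0 by (intro mult_mono) auto
  then have P: "(real i * \<theta> + x) * (real i * \<theta> + y) * \<theta>^2 \<ge> 1"
    using th0 by (simp add: field_simps power2_eq_square)
  have "uu i x - uu i y = (y - x) / ((real i * \<theta> + x) * (real i * \<theta> + y))"
    unfolding uu_def using ax ay by (simp add: field_simps)
  then have "\<bar>uu i x - uu i y\<bar> = \<bar>x - y\<bar> / ((real i * \<theta> + x) * (real i * \<theta> + y))"
    using ax ay by (simp add: abs_minus_commute)
  also have "\<dots> \<le> \<theta>^2 * \<bar>x - y\<bar>"
  proof -
    define Dn where "Dn = (real i * \<theta> + x) * (real i * \<theta> + y)"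
    have Dp: "Dn > 0" unfolding Dn_def using ax ay by simp
    have "\<bar>x - y\<bar> * 1 \<le> \<bar>x - y\<bar> * (Dn * \<theta>^2)" using P unfolding Dn_def[symmetric]
      by (intro mult_left_mono) auto
    then have "\<bar>x - y\<bar> \<le> \<theta>^2 * \<bar>x - y\<bar> * Dn" by (simp add: mult_ac)
    then show ?thesis unfolding Dn_def[symmetric] using Dp by (simp add: divide_le_eq)
  qed
  finally show ?thesis .
qed

lemma cone_branch: assumes i: "i \<ge> m" and h: "cone a h" and a: "0 \<le> a"
  shows "cone (3 * \<theta> + a * \<theta>^2) (\<lambda>y. ennreal (ww i y) * h (uu i y))"
  unfolding cone_def
proof (intro ballI)
  fix x y assume xy: "x \<in> GG" "y \<in> GG"
  have xO: "x \<in> Om" and yO: "y \<in> Om" using xy GG_Om by auto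
  have "h (uu i x) \<le> ennreal (exp (a * \<bar>uu i x - uu i y\<bar>)) * h (uu i y)"
    using h uu_GG[OF i] xy unfolding cone_def by auto
  also have "\<dots> \<le> ennreal (exp (a * \<theta>^2 * \<bar>x - y\<bar>)) * h (uu i y)"
  proof (intro mult_right_mono ennreal_leI)
    show "exp (a * \<bar>uu i x - uu i y\<bar>) \<le> exp (a * \<theta>^2 * \<bar>x - y\<bar>)"
      using uu_contr[OF i xO yO] a by (simp add: mult_left_mono mult.assoc)
  qed simp
  finally have H: "h (uu i x) \<le> ennreal (exp (a * \<theta>^2 * \<bar>x - y\<bar>)) * h (uu i y)" .
  have W: "ennreal (ww i x) \<le> ennreal (exp (3 * \<theta> * \<bar>x - y\<bar>)) * ennreal (ww i y)"
    using ww_lip[OF i xO yO] ww_nonneg yO by (simp add: Om_def ennreal_mult[symmetric])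
  have "ennreal (ww i x) * h (uu i x)
      \<le> (ennreal (exp (3 * \<theta> * \<bar>x - y\<bar>)) * ennreal (ww i y)) * (ennreal (exp (a * \<theta>^2 * \<bar>x - y\<bar>)) * h (uu i y))"
    using W H by (intro mult_mono) auto
  also have "\<dots> = ennreal (exp (3 * \<theta> * \<bar>x - y\<bar>) * exp (a * \<theta>^2 * \<bar>x - y\<bar>)) * (ennreal (ww i y) * h (uu i y))"
    by (simp add: ennreal_mult mult_ac)
  also have "exp (3 * \<theta> * \<bar>x - y\<bar>) * exp (a * \<theta>^2 * \<bar>x - y\<bar>) = exp ((3 * \<theta> + a * \<theta>^2) * \<bar>x - y\<bar>)"
    by (simp add: exp_add[symmetric] algebra_simps)
  finally show "ennreal (ww i x) * h (uu i x) \<le> ennreal (exp ((3 * \<theta> + a * \<theta>^2) * \<bar>x - y\<bar>)) * (ennreal (ww i y) * h (uu i y))" .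
qed

end

context tcf begin

lemma PP_suminf: "PP (\<lambda>z. \<Sum>j. g j z) y = (\<Sum>j. PP (g j) y)"
proof -
  have "PP (\<lambda>z. \<Sum>j. g j z) y = (\<Sum>i. \<Sum>j. ennreal (ww (i+m) y) * g j (uu (i+m) y))"
    unfolding PP_def by simp
  also have "\<dots> = (\<Sum>j. \<Sum>i. ennreal (ww (i+m) y) * g j (uu (i+m) y))" by (rule ennreal_suminf_swap)
  finally show ?thesis unfolding PP_def .
qed

lemma PPpow_suminf: "(PP ^^ k) (\<lambda>z. \<Sum>j. g j z) y = (\<Sum>j. (PP ^^ k) (g j) y)"
proof (induct k arbitrary: y)
  case 0 then show ?case by simp
next
  case (Suc k)
  have "(PP ^^ Suc k) (\<lambda>z. \<Sum>j. g j z) y = PP ((PP ^^ k) (\<lambda>z. \<Sum>j. g j z)) y" by simp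
  also have "(PP ^^ k) (\<lambda>z. \<Sum>j. g j z) = (\<lambda>z. \<Sum>j. (PP ^^ k) (g j) z)" using Suc by (intro ext) simp
  also have "PP (\<lambda>z. \<Sum>j. (PP ^^ k) (g j) z) y = (\<Sum>j. (PP ^^ Suc k) (g j) y)"
    by (simp add: PP_suminf)
  finally show ?case .
qed

lemma PP_add: "PP (\<lambda>z. f z + g z) y = PP f y + PP g y"
  unfolding PP_def by (simp add: distrib_left suminf_add[symmetric])

lemma PPpow_add_const: "y \<in> Om \<Longrightarrow> (PP ^^ j) (\<lambda>z. f z + C) y = (PP ^^ j) f y + C"
proof (induct j arbitrary: y)
  case 0 then show ?case by simp
next
  case (Suc j)
  have "(PP ^^ Suc j) (\<lambda>z. f z + C) y = PP ((PP ^^ j) (\<lambda>z. f z + C)) y" by simp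
  also have "\<dots> = PP (\<lambda>z. (PP ^^ j) f z + C) y" using Suc by (intro PP_cong) auto
  also have "\<dots> = PP ((PP ^^ j) f) y + C" using PP_add PP_const Suc by simp
  finally show ?case by simp
qed

lemma PPpow_cong_GG: assumes "\<And>x. x \<in> GG \<Longrightarrow> f x = f' x" "y \<in> GG" shows "(PP ^^ j) f y = (PP ^^ j) f' y"
  using assms(2) proof (induct j arbitrary: y)
  case 0 then show ?case using assms(1) by simp
next
  case (Suc j) then show ?case by (simp add: PP_def uu_GG)
qed

lemma cone_mono: assumes "a \<le> a'" "cone a f" shows "cone a' f"
  unfolding cone_def
proof (intro ballI)
  fix x y assume xy: "x \<in> GG" "y \<in> GG"
  have "f x \<le> ennreal (exp (a * \<bar>x - y\<bar>)) * f y" using assms(2) xy unfolding cone_def by auto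
  also have "\<dots> \<le> ennreal (exp (a' * \<bar>x - y\<bar>)) * f y"
    using assms(1) by (intro mult_right_mono ennreal_leI) (auto intro: mult_right_mono)
  finally show "f x \<le> ennreal (exp (a' * \<bar>x - y\<bar>)) * f y" .
qed

lemma cone_PP: assumes "cone a f" "0 \<le> a" shows "cone (3 * \<theta> + a * \<theta>^2) (PP f)"
  unfolding PP_def by (rule cone_suminf, rule cone_branch[OF _ assms(1) assms(2)]) simp

lemma cone_one: assumes "0 \<le> a" shows "cone a (\<lambda>_. 1)"
  unfolding cone_def
proof (intro ballI)
  fix x y :: real
  have "1 \<le> exp (a * \<bar>x - y\<bar>)" using assms by simp
  then have "ennreal 1 \<le> ennreal (exp (a * \<bar>x - y\<bar>))" by (rule ennreal_leI)
  then show "(1::ennreal) \<le> ennreal (exp (a * \<bar>x - y\<bar>)) * 1" by simp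
qed

lemma cone_dep:
  assumes a: "0 \<le> a" "3 * \<theta> + a * \<theta>^2 \<le> a"
  shows "cone a h \<Longrightarrow> dep k F \<Longrightarrow> cone a ((PP ^^ k) (\<lambda>x. h x * F x))"
proof (induct k arbitrary: h F)
  case 0 then show ?case by (simp add: cone_mult_dep0)
next
  case (Suc k)
  have e: "PP (\<lambda>x. h x * F x) = (\<lambda>y. \<Sum>j. (ennreal (ww (j+m) y) * h (uu (j+m) y)) * F (uu (j+m) y))"
    unfolding PP_def by (simp add: mult_ac)
  have "(PP ^^ Suc k) (\<lambda>x. h x * F x) = (PP ^^ k) (PP (\<lambda>x. h x * F x))"
    by (simp add: funpow_Suc_right del: funpow.simps)
  also have "\<dots> = (\<lambda>y. \<Sum>j. (PP ^^ k) (\<lambda>y. (ennreal (ww (j+m) y) * h (uu (j+m) y)) * F (uu (j+m) y)) y)"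
    unfolding e by (intro ext PPpow_suminf)
  finally have E: "(PP ^^ Suc k) (\<lambda>x. h x * F x) = \<dots>" .
  show ?case unfolding E
  proof (rule cone_suminf)
    fix j
    have "cone (3 * \<theta> + a * \<theta>^2) (\<lambda>y. ennreal (ww (j+m) y) * h (uu (j+m) y))"
      using cone_branch[of "j+m" a h] Suc.prems a by simp
    then have "cone a (\<lambda>y. ennreal (ww (j+m) y) * h (uu (j+m) y))" by (rule cone_mono[OF a(2)])
    moreover have "dep k (\<lambda>y. F (uu (j+m) y))" using dep_uu[OF Suc.prems(2)] by simp
    ultimately show "cone a ((PP ^^ k) (\<lambda>y. (ennreal (ww (j+m) y) * h (uu (j+m) y)) * F (uu (j+m) y)))"
      by (rule Suc.hyps)
  qed
qed

end

context tcf begin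

definition aa where "aa = 6 * \<theta> / (1 - \<theta>^2)"
definition dd where "dd = exp (- (aa * \<theta>)) * (1 - \<theta>^2) / 2"

lemma t2: "0 < \<theta>^2" "\<theta>^2 < 1"
  using th0 th1 by (auto simp: power_less_one_iff)

lemma aa_pos: "aa > 0" unfolding aa_def using t2 th0 by simp

lemma aa_eq: "3 * \<theta> + aa * \<theta>^2 = aa - 3 * \<theta>"
proof -
  have "aa * (1 - \<theta>^2) = 6 * \<theta>" unfolding aa_def using t2 by simp
  then show ?thesis by (simp add: algebra_simps)
qed

lemma aa_fix: "3 * \<theta> + aa * \<theta>^2 \<le> aa" using aa_eq th0 by simp

lemma dd_eq: "dd = exp (- (aa * \<theta>)) * (1 - (3 * \<theta> + aa * \<theta>^2) / aa)"
proof -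
  have "(3 * \<theta> + aa * \<theta>^2) / aa = 1 - 3 * \<theta> / aa" unfolding aa_eq using aa_pos by (simp add: field_simps)
  moreover have "3 * \<theta> / aa = (1 - \<theta>^2) / 2" unfolding aa_def using t2 th0 by (simp add: field_simps)
  ultimately show ?thesis unfolding dd_def by simp
qed

lemma dd_pos: "0 < dd" unfolding dd_def using t2 by simp

lemma dd_le: "dd \<le> exp (- (aa * \<theta>))"
proof -
  have "1 - \<theta>^2 \<le> 2" using t2 by linarith
  then have "(1 - \<theta>^2) / 2 \<le> 1" by simp
  then have "exp (- (aa * \<theta>)) * ((1 - \<theta>^2) / 2) \<le> exp (- (aa * \<theta>)) * 1"
    by (intro mult_left_mono) auto
  then show ?thesis unfolding dd_def by simp
qed

lemma dd_lt1: "dd < 1"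
proof -
  have "exp (- (aa * \<theta>)) \<le> 1" using aa_pos th0 by simp
  moreover have "1 - \<theta>^2 < 2" using t2 by linarith
  then have "(1 - \<theta>^2) / 2 < 1" by simp
  ultimately have "exp (- (aa * \<theta>)) * ((1 - \<theta>^2) / 2) < 1"
    by (smt (verit, best) exp_gt_zero mult_le_cancel_left1 mult_less_cancel_left2)
  then show ?thesis unfolding dd_def by simp
qed

lemma GG_dist: "x \<in> GG \<Longrightarrow> y \<in> GG \<Longrightarrow> \<bar>x - y\<bar> \<le> \<theta>"
proof -
  assume "x \<in> GG" "y \<in> GG"
  then have "0 < x" "x < \<theta>" "0 < y" "y < \<theta>" using GG_int by auto
  then show ?thesis by arith
qed

lemma nn_const_gam: "(\<integral>\<^sup>+x. c \<partial>gam) = c"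
  using gam_Om by (simp add: gam_space)

lemma cone_bounds:
  assumes cf: "cone a f" and a: "0 \<le> a" and [measurable]: "f \<in> borel_measurable borel"
    and int: "(\<integral>\<^sup>+x. f x \<partial>gam) = ennreal c" and c: "0 \<le> c" and x: "x \<in> GG"
  shows "f x \<le> ennreal (exp (a * \<theta>) * c)" "ennreal (exp (- (a * \<theta>)) * c) \<le> f x"
proof -
  have "f \<in> borel_measurable (restrict_space borel Om)" by (rule measurable_restrict_space1) simp
  moreover have "(borel_measurable gam :: (real \<Rightarrow> ennreal) set) = borel_measurable (restrict_space borel Om)"
    by (rule measurable_cong_sets[OF gam_sets refl])
  ultimately have fm: "f \<in> borel_measurable gam" by simp
  have E: "ennreal (exp (a * \<bar>u - v\<bar>)) \<le> ennreal (exp (a * \<theta>))" if "u \<in> GG" "v \<in> GG" for u v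
    using GG_dist[OF that] a by (intro ennreal_leI) (auto intro: mult_left_mono)
  have "f x = (\<integral>\<^sup>+y. f x \<partial>gam)" by (simp add: gam_space gam_Om)
  also have "\<dots> \<le> (\<integral>\<^sup>+y. ennreal (exp (a * \<theta>)) * f y \<partial>gam)"
  proof (rule nn_integral_mono_AE)
    show "AE y in gam. f x \<le> ennreal (exp (a * \<theta>)) * f y"
      using AE_GG
    proof eventually_elim
      case (elim y)
      have "f x \<le> ennreal (exp (a * \<bar>x - y\<bar>)) * f y" using cf x elim unfolding cone_def by auto
      also have "\<dots> \<le> ennreal (exp (a * \<theta>)) * f y" using E[OF x elim] by (intro mult_right_mono) auto
      finally show ?case .
    qed
  qed
  also have "\<dots> = ennreal (exp (a * \<theta>)) * ennreal c" using fm by (simp add: nn_integral_cmult int)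
  finally show "f x \<le> ennreal (exp (a * \<theta>) * c)" by (simp add: ennreal_mult c)
  have "ennreal c = (\<integral>\<^sup>+y. f y \<partial>gam)" using int by simp
  also have "\<dots> \<le> (\<integral>\<^sup>+y. ennreal (exp (a * \<theta>)) * f x \<partial>gam)"
  proof (rule nn_integral_mono_AE)
    show "AE y in gam. f y \<le> ennreal (exp (a * \<theta>)) * f x"
      using AE_GG
    proof eventually_elim
      case (elim y)
      have "f y \<le> ennreal (exp (a * \<bar>y - x\<bar>)) * f x" using cf x elim unfolding cone_def by auto
      also have "\<dots> \<le> ennreal (exp (a * \<theta>)) * f x" using E[OF elim x] by (intro mult_right_mono) auto
      finally show ?case .
    qed
  qed
  also have "\<dots> = ennreal (exp (a * \<theta>)) * f x" by (simp add: gam_space gam_Om)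
  finally have L: "ennreal c \<le> ennreal (exp (a * \<theta>)) * f x" .
  have "ennreal (exp (- (a * \<theta>)) * c) = ennreal (exp (- (a * \<theta>))) * ennreal c" by (simp add: ennreal_mult c)
  also have "\<dots> \<le> ennreal (exp (- (a * \<theta>))) * (ennreal (exp (a * \<theta>)) * f x)"
    using L by (intro mult_left_mono) auto
  also have "\<dots> = ennreal (exp (- (a * \<theta>)) * exp (a * \<theta>)) * f x"
    by (simp add: ennreal_mult mult.assoc)
  also have "exp (- (a * \<theta>)) * exp (a * \<theta>) = 1" by (simp add: exp_add[symmetric])
  finally show "ennreal (exp (- (a * \<theta>)) * c) \<le> f x" by simp
qed


end

lemma real_key: fixes a a' d q rx ry :: real
  assumes a: "0 < a" "0 \<le> a'" "a' \<le> a" and d: "0 \<le> d" and q: "0 \<le> q" "q \<le> ry"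
    and r: "rx \<le> exp (a' * d) * ry"
  shows "rx - q * (1 - a'/a) \<le> exp (a * d) * (ry - q * (1 - a'/a))"
proof -
  define t where "t = a'/a"
  define X where "X = exp (a * d)"
  have t: "0 \<le> t" "t \<le> 1" unfolding t_def using a by auto
  have X: "1 \<le> X" unfolding X_def using a d by simp
  have c0: "exp (t * (a * d)) \<le> (1 - t) + t * exp (a * d)"
    using convex_onD[OF exp_convex, of t 0 "a * d"] t by simp
  have e: "t * (a * d) = a' * d" unfolding t_def using a by simp
  have conv: "exp (a' * d) \<le> (1 - t) + t * X" using c0 unfolding e X_def .
  have ry0: "0 \<le> ry" using q by simp
  have "exp (a' * d) * ry \<le> ((1 - t) + t * X) * ry" using conv ry0 by (rule mult_right_mono)
  then have r2: "rx \<le> ((1 - t) + t * X) * ry" using r by linarith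
  have id: "X * (ry - q * (1 - t)) - (((1 - t) + t * X) * ry - q * (1 - t)) = (1 - t) * (X - 1) * (ry - q)"
    by (simp add: algebra_simps)
  have "0 \<le> (1 - t) * (X - 1) * (ry - q)" using t X q by simp
  then have "rx - q * (1 - t) \<le> X * (ry - q * (1 - t))" using r2 id by linarith
  then show ?thesis unfolding t_def X_def .
qed

context tcf begin

lemma contract_step:
  assumes cf: "cone aa f" and fm[measurable]: "f \<in> borel_measurable borel"
    and int: "(\<integral>\<^sup>+x. f x \<partial>gam) = ennreal c" and c: "0 \<le> c"
  shows "\<exists>f1. cone aa f1 \<and> f1 \<in> borel_measurable borel \<and> (\<integral>\<^sup>+x. f1 x \<partial>gam) = ennreal ((1 - dd) * c)
     \<and> (\<forall>y\<in>GG. PP f y = f1 y + ennreal (dd * c))"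
proof -
  define a' where "a' = 3 * \<theta> + aa * \<theta>^2"
  have a'0: "0 \<le> a'" unfolding a'_def using th0 aa_pos by simp
  have a'le: "a' \<le> aa" unfolding a'_def by (rule aa_fix)
  have cg: "cone a' (PP f)" unfolding a'_def using cf aa_pos by (intro cone_PP) auto
  have intg: "(\<integral>\<^sup>+x. PP f x \<partial>gam) = ennreal c"
    using transfer[of f "\<lambda>_. 1"] int by simp
  have lowg: "ennreal (exp (- (a' * \<theta>)) * c) \<le> PP f y" if "y \<in> GG" for y
    using cone_bounds(2)[OF cg a'0 _ intg c that] by simp
  have upg: "PP f y \<le> ennreal (exp (a' * \<theta>) * c)" if "y \<in> GG" for y
    using cone_bounds(1)[OF cg a'0 _ intg c that] by simp
  have ee: "exp (- (aa * \<theta>)) \<le> exp (- (a' * \<theta>))" using a'le th0 by (simp add: mult_right_mono)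
  have "dd \<le> exp (- (a' * \<theta>))" using dd_le ee by linarith
  then have ddc: "dd * c \<le> exp (- (a' * \<theta>)) * c"
    using c by (intro mult_right_mono) auto
  define f1 where "f1 y = PP f y - ennreal (dd * c)" for y
  have f1m[measurable]: "f1 \<in> borel_measurable borel" unfolding f1_def by measurable
  have le1: "ennreal (dd * c) \<le> PP f y" if "y \<in> GG" for y
    using ennreal_leI[OF ddc] lowg[OF that] by (rule order_trans)
  have dec: "PP f y = f1 y + ennreal (dd * c)" if "y \<in> GG" for y
    unfolding f1_def using diff_add_cancel_ennreal[OF le1[OF that]] by simp
  have int1: "(\<integral>\<^sup>+x. f1 x \<partial>gam) = ennreal ((1 - dd) * c)"
  proof -
    have "(\<integral>\<^sup>+x. f1 x \<partial>gam) = (\<integral>\<^sup>+x. PP f x \<partial>gam) - (\<integral>\<^sup>+x. ennreal (dd * c) \<partial>gam)"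
      unfolding f1_def
    proof (rule nn_integral_diff)
      have "(borel_measurable gam :: (real \<Rightarrow> ennreal) set) = borel_measurable (restrict_space borel Om)"
        by (rule measurable_cong_sets[OF gam_sets refl])
      moreover have "PP f \<in> borel_measurable (restrict_space borel Om)"
        by (rule measurable_restrict_space1) simp
      ultimately show "PP f \<in> borel_measurable gam" by simp
      show "(\<lambda>x. ennreal (dd * c)) \<in> borel_measurable gam" by simp
      show "(\<integral>\<^sup>+x. ennreal (dd * c) \<partial>gam) \<noteq> \<infinity>" by (simp add: gam_space gam_Om)
      show "AE x in gam. ennreal (dd * c) \<le> PP f x" using AE_GG by eventually_elim (rule le1)
    qed
    also have "\<dots> = ennreal c - ennreal (dd * c)" using intg by (simp add: gam_space gam_Om)
    also have "\<dots> = ennreal ((1 - dd) * c)" using dd_pos c by (simp add: ennreal_minus algebra_simps)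
    finally show ?thesis .
  qed
  have cf1: "cone aa f1" unfolding cone_def
  proof (intro ballI)
    fix x y assume x: "x \<in> GG" and y: "y \<in> GG"
    obtain rx where rx: "PP f x = ennreal rx" "0 \<le> rx"
      using upg[OF x] by (cases "PP f x") (auto simp: top_unique)
    obtain ry where ry: "PP f y = ennreal ry" "0 \<le> ry"
      using upg[OF y] by (cases "PP f y") (auto simp: top_unique)
    define q where "q = exp (- (aa * \<theta>)) * c"
    have q0: "0 \<le> q" unfolding q_def using c by simp
    have ery: "exp (- (a' * \<theta>)) * c \<le> ry" using lowg[OF y] ry c by simp
    have "q \<le> exp (- (a' * \<theta>)) * c" unfolding q_def using ee c by (intro mult_right_mono)
    then have qry: "q \<le> ry" using ery by linarith
    have "ennreal rx \<le> ennreal (exp (a' * \<bar>x - y\<bar>)) * ennreal ry" using cg x y unfolding cone_def rx(1)[symmetric] ry(1)[symmetric] by blast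
    then have "rx \<le> exp (a' * \<bar>x - y\<bar>) * ry" using ry by (simp add: ennreal_mult[symmetric])
    from real_key[OF aa_pos a'0 a'le _ q0 qry this]
    have K: "rx - q * (1 - a'/aa) \<le> exp (aa * \<bar>x - y\<bar>) * (ry - q * (1 - a'/aa))" by simp
    have qd: "q * (1 - a'/aa) = dd * c" unfolding q_def dd_eq a'_def by (simp add: mult_ac)
    have ddc0: "0 \<le> dd * c" using dd_pos c by simp
    have ryd: "0 \<le> ry - dd * c" using ery ddc by linarith
    have "f1 x = ennreal (rx - dd * c)" unfolding f1_def rx(1) using ddc0 by (simp add: ennreal_minus)
    also have "\<dots> \<le> ennreal (exp (aa * \<bar>x - y\<bar>) * (ry - dd * c))" using K qd by (intro ennreal_leI) simp
    also have "\<dots> = ennreal (exp (aa * \<bar>x - y\<bar>)) * f1 y"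
      unfolding f1_def ry(1) using ddc0 ryd by (simp add: ennreal_minus ennreal_mult)
    finally show "f1 x \<le> ennreal (exp (aa * \<bar>x - y\<bar>)) * f1 y" .
  qed
  show ?thesis using cf1 f1m int1 dec by blast
qed

end

context tcf begin

lemma iterate:
  assumes "cone aa f" "f \<in> borel_measurable borel" "(\<integral>\<^sup>+x. f x \<partial>gam) = ennreal c" "0 \<le> c" "y \<in> GG"
  shows "(PP ^^ j) f y \<le> ennreal (c + c * (1 - dd)^j * exp (aa * \<theta>))
       \<and> ennreal c \<le> (PP ^^ j) f y + ennreal (c * (1 - dd)^j * exp (aa * \<theta>))"
  using assms proof (induct j arbitrary: f c)
  case 0
  have e1: "1 \<le> exp (aa * \<theta>)" using aa_pos th0 by simp
  have ce: "c \<le> c * exp (aa * \<theta>)" using e1 0 by (simp add: mult_le_cancel_left1)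
  have "f y \<le> ennreal (exp (aa * \<theta>) * c)"
    using cone_bounds(1)[OF 0(1) _ 0(2,3,4,5)] aa_pos by simp
  also have "\<dots> \<le> ennreal (c + c * exp (aa * \<theta>))" using 0 by (intro ennreal_leI) (simp add: mult_ac)
  finally have U: "f y \<le> ennreal (c + c * exp (aa * \<theta>))" .
  have "ennreal c \<le> ennreal (c * exp (aa * \<theta>))" using ce by (rule ennreal_leI)
  also have "\<dots> \<le> f y + ennreal (c * exp (aa * \<theta>))" by simp
  finally show ?case using U by simp
next
  case (Suc j)
  obtain f1 where f1: "cone aa f1" "f1 \<in> borel_measurable borel"
      "(\<integral>\<^sup>+x. f1 x \<partial>gam) = ennreal ((1 - dd) * c)" "\<forall>y\<in>GG. PP f y = f1 y + ennreal (dd * c)"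
    using contract_step[OF Suc.prems(1-4)] by blast
  define c1 where "c1 = (1 - dd) * c"
  have c1: "0 \<le> c1" unfolding c1_def using dd_lt1 Suc.prems(4) by simp
  have ddc: "0 \<le> dd * c" using dd_pos Suc.prems(4) by simp
  have yO: "y \<in> Om" using GG_Om Suc.prems(5) by simp
  have "(PP ^^ Suc j) f y = (PP ^^ j) (PP f) y" by (simp add: funpow_Suc_right del: funpow.simps)
  also have "\<dots> = (PP ^^ j) (\<lambda>z. f1 z + ennreal (dd * c)) y"
    using f1(4) Suc.prems(5) by (intro PPpow_cong_GG) auto
  also have "\<dots> = (PP ^^ j) f1 y + ennreal (dd * c)" using yO by (rule PPpow_add_const)
  finally have E: "(PP ^^ Suc j) f y = (PP ^^ j) f1 y + ennreal (dd * c)" .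
  have IH: "(PP ^^ j) f1 y \<le> ennreal (c1 + c1 * (1 - dd)^j * exp (aa * \<theta>))"
      "ennreal c1 \<le> (PP ^^ j) f1 y + ennreal (c1 * (1 - dd)^j * exp (aa * \<theta>))"
    using Suc.hyps[OF f1(1,2) _ c1 Suc.prems(5)] f1(3) unfolding c1_def by auto
  have R: "c1 * (1 - dd)^j * exp (aa * \<theta>) = c * (1 - dd)^Suc j * exp (aa * \<theta>)"
    unfolding c1_def by (simp add: mult_ac)
  have R0: "0 \<le> c * (1 - dd)^Suc j * exp (aa * \<theta>)" using Suc.prems(4) dd_lt1 by simp
  have "(PP ^^ Suc j) f y \<le> ennreal (c1 + c1 * (1 - dd)^j * exp (aa * \<theta>)) + ennreal (dd * c)"
    unfolding E using IH(1) by (rule add_right_mono)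
  also have "\<dots> = ennreal (c1 + c1 * (1 - dd)^j * exp (aa * \<theta>) + dd * c)"
    using c1 ddc R R0 by (subst ennreal_plus) auto
  also have "c1 + c1 * (1 - dd)^j * exp (aa * \<theta>) + dd * c = c + c * (1 - dd)^Suc j * exp (aa * \<theta>)"
    using R unfolding c1_def by (simp add: algebra_simps)
  finally have U: "(PP ^^ Suc j) f y \<le> ennreal (c + c * (1 - dd)^Suc j * exp (aa * \<theta>))" .
  have "c = c1 + dd * c" unfolding c1_def by (simp add: algebra_simps)
  then have "ennreal c = ennreal c1 + ennreal (dd * c)"
    using c1 ddc by (metis ennreal_plus)
  also have "\<dots> \<le> ((PP ^^ j) f1 y + ennreal (c1 * (1 - dd)^j * exp (aa * \<theta>))) + ennreal (dd * c)"
    using IH(2) by (rule add_right_mono)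
  also have "\<dots> = (PP ^^ Suc j) f y + ennreal (c * (1 - dd)^Suc j * exp (aa * \<theta>))"
    unfolding E R by (simp add: ac_simps)
  finally show ?case using U by simp
qed

lemma digit_meas[measurable]: "digit \<theta> i \<in> borel \<rightarrow>\<^sub>M count_space UNIV"
  unfolding digit_def by measurable

lemma gam_borel: "X \<in> sets gam \<Longrightarrow> X \<in> sets borel \<and> X \<subseteq> Om"
  unfolding gam_sets by (subst (asm) sets_restrict_space_iff) auto

lemma sigma_sub: "digit_sigma \<theta> I \<subseteq> sets gam"
proof -
  have sp: "space gam = {0..\<theta>}" by (simp add: gam_space Om_def)
  have "{digit \<theta> i -` D \<inter> {0..\<theta>} | i D. i \<in> I} \<subseteq> sets gam"
  proof
    fix X assume "X \<in> {digit \<theta> i -` D \<inter> {0..\<theta>} | i D. i \<in> I}"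
    then obtain i D where X: "X = digit \<theta> i -` D \<inter> {0..\<theta>}" by blast
    have "digit \<theta> i -` D \<inter> space borel \<in> sets borel"
      by (rule measurable_sets[OF digit_meas]) simp
    then have "digit \<theta> i -` D \<inter> Om \<in> sets gam" by (intro sets_gamI) simp
    then show "X \<in> sets gam" unfolding X Om_def .
  qed
  from sets.sigma_sets_subset[OF this] show ?thesis unfolding digit_sigma_def sp .
qed

lemma digit_shift: "s \<ge> 1 \<Longrightarrow> digit \<theta> (s + N) x = digit \<theta> s ((T ^^ N) x)"
proof -
  assume s: "s \<ge> 1"
  have "s + N - 1 = (s - 1) + N" using s by simp
  then have "(T ^^ (s + N - 1)) x = (T ^^ (s - 1)) ((T ^^ N) x)" by (simp add: funpow_add)
  then show ?thesis unfolding digit_def by simp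
qed

lemma B_rep: assumes "B \<in> digit_sigma \<theta> {k + n..}" "n \<ge> 1"
  shows "\<exists>B'. B' \<in> sets borel \<and> B = (T ^^ (k + n - 1)) -` B' \<inter> Om"
  using assms(1) unfolding digit_sigma_def
proof (induct rule: sigma_sets.induct)
  case (Basic a)
  then obtain i D where a: "a = digit \<theta> i -` D \<inter> {0..\<theta>}" "i \<ge> k + n" by blast
  define N where "N = k + n - 1"
  define s where "s = i - N"
  have s: "s \<ge> 1" "i = s + N" unfolding s_def N_def using a(2) assms(2) by auto
  have "digit \<theta> s -` D \<inter> space borel \<in> sets borel"
    by (rule measurable_sets[OF digit_meas]) simp
  moreover have "a = (T ^^ N) -` (digit \<theta> s -` D) \<inter> Om"
    unfolding a(1) Om_def s(2) using digit_shift[OF s(1)] by auto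
  ultimately show ?case unfolding N_def by auto
next
  case Empty then show ?case by (intro exI[of _ "{}"]) auto
next
  case (Compl a)
  then obtain B' where B': "B' \<in> sets borel" "a = (T ^^ (k + n - 1)) -` B' \<inter> Om" by blast
  have "{0..\<theta>} - a = (T ^^ (k + n - 1)) -` (- B') \<inter> Om" unfolding B'(2) Om_def by auto
  moreover have "- B' \<in> sets borel" using B'(1) by (metis borel_comp)
  ultimately show ?case by blast
next
  case (Union a)
  then have "\<forall>i. \<exists>B'. B' \<in> sets borel \<and> a i = (T ^^ (k + n - 1)) -` B' \<inter> Om" by blast
  then obtain B' where B': "\<And>i. B' i \<in> sets borel" "\<And>i. a i = (T ^^ (k + n - 1)) -` B' i \<inter> Om"
    by metis
  have "(\<Union>i. a i) = (T ^^ (k + n - 1)) -` (\<Union>i. B' i) \<inter> Om" using B'(2) by auto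
  moreover have "(\<Union>i. B' i) \<in> sets borel" using B'(1) by auto
  ultimately show ?case by blast
qed

end

context tcf begin

lemma meas_gam: "(f :: real \<Rightarrow> ennreal) \<in> borel_measurable borel \<Longrightarrow> f \<in> borel_measurable gam"
proof -
  assume f: "f \<in> borel_measurable borel"
  have "(borel_measurable gam :: (real \<Rightarrow> ennreal) set) = borel_measurable (restrict_space borel Om)"
    by (rule measurable_cong_sets[OF gam_sets refl])
  moreover have "f \<in> borel_measurable (restrict_space borel Om)" using f
    by (rule measurable_restrict_space1)
  ultimately show ?thesis by simp
qed

lemma ind_cmult: assumes "B' \<in> sets borel"
  shows "(\<integral>\<^sup>+y. indicator B' y * ennreal C \<partial>gam) = ennreal C * emeasure gam (B' \<inter> Om)"
proof -
  have "(\<integral>\<^sup>+y. indicator B' y * ennreal C \<partial>gam) = (\<integral>\<^sup>+y. ennreal C * indicator (B' \<inter> Om) y \<partial>gam)"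
    by (intro nn_integral_cong) (auto simp: gam_space indicator_def)
  also have "\<dots> = ennreal C * emeasure gam (B' \<inter> Om)"
    using sets_gamI[OF assms] by (rule nn_integral_cmult_indicator)
  finally show ?thesis .
qed

lemma mixing:
  assumes A: "A \<in> digit_sigma \<theta> {1..k}" and B'[measurable]: "B' \<in> sets borel"
  shows "\<bar>measure gam (A \<inter> ((T ^^ (k + j)) -` B' \<inter> Om)) - measure gam A * measure gam ((T ^^ (k + j)) -` B' \<inter> Om)\<bar>
     \<le> exp (aa * \<theta>) * (1 - dd)^j * measure gam A * measure gam ((T ^^ (k + j)) -` B' \<inter> Om)"
proof -
  interpret P: prob_space gam by (rule prob_gam)
  define B where "B = (T ^^ (k + j)) -` B' \<inter> Om"
  have Ag: "A \<in> sets gam" using sigma_sub A by blast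
  have Ab: "A \<in> sets borel" and AO: "A \<subseteq> Om" using gam_borel[OF Ag] by auto
  have Bg: "B \<in> sets gam" unfolding B_def
    using measurable_sets[OF Tpow_meas B'] by (intro sets_gamI) simp
  have ABg: "A \<inter> B \<in> sets gam" using Ag Bg by auto
  have B'g: "B' \<inter> Om \<in> sets gam" by (rule sets_gamI[OF B'])
  have eB: "emeasure gam B = emeasure gam (B' \<inter> Om)" unfolding B_def by (rule invariance[OF B'])
  define mB where "mB = measure gam (B' \<inter> Om)"
  have mBB: "measure gam B = mB" using eB unfolding mB_def by (simp add: measure_def)
  define cA where "cA = measure gam A"
  define mAB where "mAB = measure gam (A \<inter> B)"
  have cA0: "0 \<le> cA" and mB0: "0 \<le> mB" and mAB0: "0 \<le> mAB" unfolding cA_def mB_def mAB_def by auto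
  define E where "E = cA * (1 - dd)^j * exp (aa * \<theta>)"
  have E0: "0 \<le> E" unfolding E_def using cA0 dd_lt1 by simp
  have Aim[measurable]: "(indicator A :: real \<Rightarrow> ennreal) \<in> borel_measurable borel" using Ab by simp
  define F where "F = (PP ^^ k) (indicator A :: real \<Rightarrow> ennreal)"
  have Fm[measurable]: "F \<in> borel_measurable borel" unfolding F_def by simp
  have "cone aa ((PP ^^ k) (\<lambda>x. 1 * indicator A x))"
    using aa_pos aa_fix cone_one[of aa] dep_sigma[OF A] by (intro cone_dep) auto
  then have cF: "cone aa F" unfolding F_def by simp
  have "(\<integral>\<^sup>+x. F x \<partial>gam) = (\<integral>\<^sup>+x. 1 * indicator A x \<partial>gam)"
    using transfer_pow[of "indicator A" "\<lambda>_. 1" k] unfolding F_def by simp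
  also have "\<dots> = ennreal cA" using Ag unfolding cA_def by (simp add: P.emeasure_eq_measure)
  finally have intF: "(\<integral>\<^sup>+x. F x \<partial>gam) = ennreal cA" .
  have it: "(PP ^^ j) F y \<le> ennreal (cA + E) \<and> ennreal cA \<le> (PP ^^ j) F y + ennreal E" if "y \<in> GG" for y
    using iterate[OF cF Fm intF cA0 that, of j] unfolding E_def by simp
  have AB: "emeasure gam (A \<inter> B) = (\<integral>\<^sup>+y. indicator B' y * (PP ^^ j) F y \<partial>gam)"
  proof -
    have "emeasure gam (A \<inter> B) = (\<integral>\<^sup>+x. indicator (A \<inter> B) x \<partial>gam)" using ABg by simp
    also have "\<dots> = (\<integral>\<^sup>+x. indicator B' ((T ^^ (k + j)) x) * indicator A x \<partial>gam)"
      by (intro nn_integral_cong) (auto simp: gam_space indicator_def B_def)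
    also have "\<dots> = (\<integral>\<^sup>+y. indicator B' y * (PP ^^ (k + j)) (indicator A) y \<partial>gam)"
      by (rule transfer_pow) auto
    also have "(PP ^^ (k + j)) (indicator A) = (PP ^^ j) F"
      unfolding F_def by (simp add: add.commute[of k j] funpow_add)
    finally show ?thesis .
  qed
  have "emeasure gam (A \<inter> B) \<le> (\<integral>\<^sup>+y. indicator B' y * ennreal (cA + E) \<partial>gam)"
    unfolding AB
  proof (rule nn_integral_mono_AE)
    show "AE y in gam. indicator B' y * (PP ^^ j) F y \<le> indicator B' y * ennreal (cA + E)"
      using AE_GG by eventually_elim (use it in \<open>auto intro: mult_left_mono\<close>)
  qed
  also have "\<dots> = ennreal (cA + E) * ennreal mB"
    unfolding ind_cmult[OF B'] mB_def P.emeasure_eq_measure ..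
  finally have U: "ennreal mAB \<le> ennreal ((cA + E) * mB)"
    unfolding mAB_def P.emeasure_eq_measure using cA0 E0 mB0 by (simp add: ennreal_mult)
  have "ennreal cA * ennreal mB = (\<integral>\<^sup>+y. indicator B' y * ennreal cA \<partial>gam)"
    unfolding ind_cmult[OF B'] mB_def P.emeasure_eq_measure ..
  also have "\<dots> \<le> (\<integral>\<^sup>+y. indicator B' y * (PP ^^ j) F y + indicator B' y * ennreal E \<partial>gam)"
  proof (rule nn_integral_mono_AE)
    show "AE y in gam. indicator B' y * ennreal cA \<le> indicator B' y * (PP ^^ j) F y + indicator B' y * ennreal E"
      using AE_GG
    proof eventually_elim
      case (elim y)
      have "indicator B' y * ennreal cA \<le> indicator B' y * ((PP ^^ j) F y + ennreal E)"
        using it[OF elim] by (intro mult_left_mono) auto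
      then show ?case by (simp add: distrib_left)
    qed
  qed
  also have "\<dots> = (\<integral>\<^sup>+y. indicator B' y * (PP ^^ j) F y \<partial>gam) + (\<integral>\<^sup>+y. indicator B' y * ennreal E \<partial>gam)"
    by (rule nn_integral_add) (auto intro: meas_gam)
  also have "\<dots> = ennreal mAB + ennreal E * ennreal mB"
    unfolding AB[symmetric] ind_cmult[OF B'] mB_def mAB_def P.emeasure_eq_measure ..
  finally have L: "ennreal (cA * mB) \<le> ennreal (mAB + E * mB)"
    using cA0 E0 mB0 mAB0 by (simp add: ennreal_mult ennreal_plus)
  have U': "mAB \<le> (cA + E) * mB" using U cA0 E0 mB0 by (simp add: ennreal_le_iff)
  have L': "cA * mB \<le> mAB + E * mB" using L mAB0 E0 mB0 by (subst (asm) ennreal_le_iff) auto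
  have "\<bar>mAB - cA * mB\<bar> \<le> E * mB" using U' L' by (simp add: algebra_simps abs_le_iff)
  also have "E * mB = exp (aa * \<theta>) * (1 - dd)^j * cA * mB" unfolding E_def by (simp add: mult_ac)
  finally show ?thesis unfolding mAB_def cA_def mBB[unfolded B_def] mB_def[symmetric] B_def .
qed

end

theorem proposition2p3:
  fixes \<theta> :: real and m :: nat
  assumes "0 < \<theta>" "\<theta> < 1" "\<theta> \<notin> \<rat>" "m > 0" "\<theta>\<^sup>2 = 1 / real m"
  shows "\<exists>K>0. \<exists>\<rho>. 0 < \<rho> \<and> \<rho> < 1 \<and>
    (\<forall>k n A B. k \<ge> 1 \<longrightarrow> n \<ge> 1 \<longrightarrow>
       A \<in> digit_sigma \<theta> {1..k} \<longrightarrow> B \<in> digit_sigma \<theta> {k + n..} \<longrightarrow>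
       \<bar>measure (gamma_meas \<theta>) (A \<inter> B) - measure (gamma_meas \<theta>) A * measure (gamma_meas \<theta>) B\<bar>
         \<le> K * \<rho> ^ n * measure (gamma_meas \<theta>) A * measure (gamma_meas \<theta>) B) \<and>
    summable (\<lambda>n. K * \<rho> ^ n)"
proof -
  interpret tcf \<theta> m using assms by unfold_locales auto
  define \<rho> where "\<rho> = 1 - dd"
  define K where "K = exp (aa * \<theta>) / \<rho>"
  have r: "0 < \<rho>" "\<rho> < 1" unfolding \<rho>_def using dd_pos dd_lt1 by auto
  have K: "K > 0" unfolding K_def using r by simp
  have S: "summable (\<lambda>n. K * \<rho> ^ n)"
    using r by (intro summable_mult summable_geometric) simp
  have M: "\<bar>measure (gamma_meas \<theta>) (A \<inter> B) - measure (gamma_meas \<theta>) A * measure (gamma_meas \<theta>) B\<bar>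
         \<le> K * \<rho> ^ n * measure (gamma_meas \<theta>) A * measure (gamma_meas \<theta>) B"
    if hyp: "k \<ge> 1" "n \<ge> 1" "A \<in> digit_sigma \<theta> {1..k}" "B \<in> digit_sigma \<theta> {k + n..}" for k n A B
  proof -
    obtain B' where B': "B' \<in> sets borel" "B = (T_map \<theta> ^^ (k + n - 1)) -` B' \<inter> Om"
      using B_rep[OF hyp(4) hyp(2)] by blast
    have kn: "k + n - 1 = k + (n - 1)" using hyp(2) by simp
    have "K * \<rho> ^ n = exp (aa * \<theta>) * (1 - dd) ^ (n - 1)"
    proof -
      have "\<rho> ^ n = \<rho> * \<rho> ^ (n - 1)" using hyp(2) by (metis Suc_diff_1 less_le_trans zero_less_one power_Suc)
      then show ?thesis unfolding K_def using r by (simp add: \<rho>_def)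
    qed
    then show ?thesis using mixing[OF hyp(3) B'(1), of "n - 1"] unfolding B'(2) kn by simp
  qed
  show ?thesis using K r S M by blast
qed

end
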